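(* Let $G$ be a connected $r$-regular graph with $n$ vertices, $m$ edges and $r\ge2$, and let $a,b,c,d$ be vertices of $G$ (viewed also as vertices of $\mathcal Q(G)$). For each Laplacian eigenvalue $\theta$ of $G$ put $\Delta_\theta=\sqrt{(r+2-\theta)^2+4\theta}$, and let $F_\theta(G)$ be the eigenprojector of $L_G$ for $\theta$. (a) If $G$ is non-bipartite, then for all $t\in\mathbb R$, $$\tfrac12(\mathbf e_a^{m+n}-\mathbf e_b^{m+n})^\top e^{-\mathrm it L_{\mathcal Q(G)}}(\mathbf e_c^{m+n}-\mathbf e_d^{m+n})=\tfrac12 e^{-\mathrm it(r+2)/2}\sum_{\theta\in\mathrm{Spec}_L(G)}e^{-\mathrm it\theta/2}(\mathbf e_a^n-\mathbf e_b^n)^\top F_\theta(G)(\mathbf e_c^n-\mathbf e_d^n)\Big(\cos\tfrac{\Delta_\theta t}{2}+\mathrm i\,\tfrac{\theta+2-r}{\Delta_\theta}\sin\tfrac{\Delta_\theta t}{2}\Big).$$ (b) If $G$ is bipartite, then for all $t\in\mathbb R$, $$\tfrac12(\mathbf e_a^{m+n}-\mathbf e_b^{m+n})^\top e^{-\mathrm it L_{\mathcal Q(G)}}(\mathbf e_c^{m+n}-\mathbf e_d^{m+n})=\tfrac12 e^{-\mathrm it(r+2)/2}\sum_{\theta\in\mathrm{Spec}_L(G)\setminus\{2r\}}e^{-\mathrm it\theta/2}(\mathbf e_a^n-\mathbf e_b^n)^\top F_\theta(G)(\mathbf e_c^n-\mathbf e_d^n)\Big(\cos\tfrac{\Delta_\theta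 t}{2}+\mathrm i\,\tfrac{\theta+2-r}{\Delta_\theta}\sin\tfrac{\Delta_\theta t}{2}\Big)+\tfrac12 e^{-\mathrm i rt}(\mathbf e_a^n-\mathbf e_b^n)^\top F_{2r}(G)(\mathbf e_c^n-\mathbf e_d^n).$$
   Context: The Q-graph $\mathcal Q(G)$ is obtained from $G$ by inserting a new vertex into each edge of $G$ and joining by an edge each pair of new vertices lying on adjacent edges of $G$; its vertex set is $V(G)\cup I(G)$ with $I(G)$ the set of new vertices, and its vertices are ordered with the $n$ vertices of $G$ first. $\mathbf e_u^{k}$ denotes the $k$-dimensional standard unit vector of vertex $u$ (in $\mathcal Q(G)$ for $k=m+n$, in $G$ for $k=n$). $L_H=D_H-A_H$ is the Laplacian of a graph $H$, $\mathrm{Spec}_L(G)$ the set of distinct Laplacian eigenvalues of $G$, and $F_\theta(G)$ the orthogonal projection onto the $\theta$-eigenspace of $L_G$. *)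

theory Defs
  imports Complex_Main
begin

definition simple_graph :: "'v set \<Rightarrow> ('v \<Rightarrow> 'v \<Rightarrow> bool) \<Rightarrow> bool" where
  "simple_graph V adj \<longleftrightarrow> finite V \<and> (\<forall>u w. adj u w \<longrightarrow> u \<in> V \<and> w \<in> V)
     \<and> (\<forall>u w. adj u w \<longrightarrow> adj w u) \<and> (\<forall>u. \<not> adj u u)"

definition neighbours :: "'v set \<Rightarrow> ('v \<Rightarrow> 'v \<Rightarrow> bool) \<Rightarrow> 'v \<Rightarrow> 'v set" where
  "neighbours V adj u = {w \<in> V. adj u w}"

definition degree :: "'v set \<Rightarrow> ('v \<Rightarrow> 'v \<Rightarrow> bool) \<Rightarrow> 'v \<Rightarrow> nat" where
  "degree V adj u = card (neighbours V adj u)"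

definition regular :: "'v set \<Rightarrow> ('v \<Rightarrow> 'v \<Rightarrow> bool) \<Rightarrow> nat \<Rightarrow> bool" where
  "regular V adj r \<longleftrightarrow> (\<forall>u \<in> V. degree V adj u = r)"

definition connected_graph :: "'v set \<Rightarrow> ('v \<Rightarrow> 'v \<Rightarrow> bool) \<Rightarrow> bool" where
  "connected_graph V adj \<longleftrightarrow> V \<noteq> {} \<and> (\<forall>u \<in> V. \<forall>w \<in> V. adj\<^sup>*\<^sup>* u w)"

definition bipartite :: "'v set \<Rightarrow> ('v \<Rightarrow> 'v \<Rightarrow> bool) \<Rightarrow> bool" where
  "bipartite V adj \<longleftrightarrow> (\<exists>X Y. X \<union> Y = V \<and> X \<inter> Y = {} \<and>
     (\<forall>u w. adj u w \<longrightarrow> (u \<in> X \<and> w \<in> Y) \<or> (u \<in> Y \<and> w \<in> X)))"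

definition edges :: "'v set \<Rightarrow> ('v \<Rightarrow> 'v \<Rightarrow> bool) \<Rightarrow> 'v set set" where
  "edges V adj = {{u, w} | u w. adj u w}"

text \<open>Vertices of Q(G): Inl v for the original vertices v, Inr e for the new vertex
inserted into the edge e.\<close>

definition Q_vertices :: "'v set \<Rightarrow> ('v \<Rightarrow> 'v \<Rightarrow> bool) \<Rightarrow> ('v + 'v set) set" where
  "Q_vertices V adj = Inl ` V \<union> Inr ` edges V adj"

fun Q_adj :: "'v set \<Rightarrow> ('v \<Rightarrow> 'v \<Rightarrow> bool) \<Rightarrow> ('v + 'v set) \<Rightarrow> ('v + 'v set) \<Rightarrow> bool" where
  "Q_adj V adj (Inl u) (Inl w) = False"
| "Q_adj V adj (Inl u) (Inr e) = (e \<in> edges V adj \<and> u \<in> e)"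
| "Q_adj V adj (Inr e) (Inl u) = (e \<in> edges V adj \<and> u \<in> e)"
| "Q_adj V adj (Inr e) (Inr f) = (e \<in> edges V adj \<and> f \<in> edges V adj \<and> e \<noteq> f \<and> e \<inter> f \<noteq> {})"

definition laplacian :: "'v set \<Rightarrow> ('v \<Rightarrow> 'v \<Rightarrow> bool) \<Rightarrow> 'v \<Rightarrow> 'v \<Rightarrow> real" where
  "laplacian V adj u w = (if u \<in> V \<and> w \<in> V then
      (if u = w then real (degree V adj u) else if adj u w then -1 else 0) else 0)"

definition mat_mult :: "'v set \<Rightarrow> ('v \<Rightarrow> 'v \<Rightarrow> 'a::comm_semiring_0) \<Rightarrow> ('v \<Rightarrow> 'v \<Rightarrow> 'a) \<Rightarrow> 'v \<Rightarrow> 'v \<Rightarrow> 'a" where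
  "mat_mult S A B i j = (\<Sum>k\<in>S. A i k * B k j)"

definition mat_id :: "'v set \<Rightarrow> 'v \<Rightarrow> 'v \<Rightarrow> 'a::{zero,one}" where
  "mat_id S i j = (if i = j \<and> i \<in> S then 1 else 0)"

fun mat_pow :: "'v set \<Rightarrow> ('v \<Rightarrow> 'v \<Rightarrow> 'a::comm_semiring_1) \<Rightarrow> nat \<Rightarrow> 'v \<Rightarrow> 'v \<Rightarrow> 'a" where
  "mat_pow S A 0 = mat_id S"
| "mat_pow S A (Suc k) = mat_mult S A (mat_pow S A k)"

definition mat_exp :: "'v set \<Rightarrow> ('v \<Rightarrow> 'v \<Rightarrow> complex) \<Rightarrow> 'v \<Rightarrow> 'v \<Rightarrow> complex" where
  "mat_exp S A i j = (\<Sum>k. mat_pow S A k i j / of_nat (fact k))"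

definition mat_vec :: "'v set \<Rightarrow> ('v \<Rightarrow> 'v \<Rightarrow> 'a::comm_semiring_0) \<Rightarrow> ('v \<Rightarrow> 'a) \<Rightarrow> 'v \<Rightarrow> 'a" where
  "mat_vec S A x i = (\<Sum>j\<in>S. A i j * x j)"

definition bilin :: "'v set \<Rightarrow> ('v \<Rightarrow> 'a::comm_semiring_0) \<Rightarrow> ('v \<Rightarrow> 'v \<Rightarrow> 'a) \<Rightarrow> ('v \<Rightarrow> 'a) \<Rightarrow> 'a" where
  "bilin S x M y = (\<Sum>i\<in>S. \<Sum>j\<in>S. x i * M i j * y j)"

definition unit_vec :: "'v \<Rightarrow> 'v \<Rightarrow> 'a::{zero,one}" where
  "unit_vec u v = (if v = u then 1 else 0)"

definition supported :: "'v set \<Rightarrow> ('v \<Rightarrow> real) \<Rightarrow> bool" where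
  "supported S x \<longleftrightarrow> (\<forall>i. i \<notin> S \<longrightarrow> x i = 0)"

definition eigenspace :: "'v set \<Rightarrow> ('v \<Rightarrow> 'v \<Rightarrow> real) \<Rightarrow> real \<Rightarrow> ('v \<Rightarrow> real) set" where
  "eigenspace S A \<theta> = {x. supported S x \<and> (\<forall>i\<in>S. mat_vec S A x i = \<theta> * x i)}"

definition spectrum :: "'v set \<Rightarrow> ('v \<Rightarrow> 'v \<Rightarrow> real) \<Rightarrow> real set" where
  "spectrum S A = {\<theta>. \<exists>x \<in> eigenspace S A \<theta>. \<exists>i \<in> S. x i \<noteq> 0}"

definition lap_spectrum :: "'v set \<Rightarrow> ('v \<Rightarrow> 'v \<Rightarrow> bool) \<Rightarrow> real set" where
  "lap_spectrum V adj = spectrum V (laplacian V adj)"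

definition inner_S :: "'v set \<Rightarrow> ('v \<Rightarrow> real) \<Rightarrow> ('v \<Rightarrow> real) \<Rightarrow> real" where
  "inner_S S x y = (\<Sum>i\<in>S. x i * y i)"

definition eig_proj :: "'v set \<Rightarrow> ('v \<Rightarrow> 'v \<Rightarrow> real) \<Rightarrow> real \<Rightarrow> 'v \<Rightarrow> 'v \<Rightarrow> real" where
  "eig_proj S A \<theta> = (THE P. (\<forall>i j. P i j \<noteq> 0 \<longrightarrow> i \<in> S \<and> j \<in> S)
      \<and> (\<forall>x \<in> eigenspace S A \<theta>. \<forall>i\<in>S. mat_vec S P x i = x i)
      \<and> (\<forall>y. supported S y \<and> (\<forall>x \<in> eigenspace S A \<theta>. inner_S S x y = 0)
             \<longrightarrow> (\<forall>i\<in>S. mat_vec S P y i = 0)))"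

definition lap_proj :: "'v set \<Rightarrow> ('v \<Rightarrow> 'v \<Rightarrow> bool) \<Rightarrow> real \<Rightarrow> 'v \<Rightarrow> 'v \<Rightarrow> real" where
  "lap_proj V adj \<theta> = eig_proj V (laplacian V adj) \<theta>"

definition Delta_Q :: "nat \<Rightarrow> real \<Rightarrow> real" where
  "Delta_Q r \<theta> = sqrt ((real r + 2 - \<theta>)\<^sup>2 + 4 * \<theta>)"

end

theory Submission
  imports Defs "HOL-Library.Function_Algebras" "HOL-Analysis.Analysis"
begin


lemma fun_sum_apply: "(\<Sum>v\<in>T. f v) i = (\<Sum>v\<in>T. f v i)"
  for f :: "'b \<Rightarrow> 'a \<Rightarrow> 'c::comm_monoid_add"
  by (induction T rule: infinite_finite_induct) auto

interpretation fv: vector_space "\<lambda>(c::real) (f::'a \<Rightarrow> real) i. c * f i"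
  by unfold_locales (auto simp: algebra_simps fun_eq_iff)

lemma quad_nonpos_lin_zero:
  fixes a b :: real
  assumes "\<And>s. 2 * s * a + s^2*b \<le> 0"
  shows "a = 0"
proof (rule ccontr)
  assume "a \<noteq> 0"
  define c where "c = \<bar>b\<bar> + 1"
  have c: "c > 0" unfolding c_def by simp
  have "2*(a/c)*a + (a/c)^2*b \<le> 0" using assms .
  hence "(2*(a/c)*a + (a/c)^2*b) * c^2 \<le> 0" using c
    by (simp add: mult_nonpos_nonneg)
  also have "(2*(a/c)*a + (a/c)^2*b) * c^2 = a^2 * (2*c + b)"
    using c by (simp add: field_simps power2_eq_square)
  finally have "a^2 * (2*c + b) \<le> 0" .
  moreover have "2*c + b > 0" unfolding c_def by (cases "b \<ge> 0") auto
  moreover have "a^2 > 0" using \<open>a \<noteq> 0\<close> by simp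
  ultimately show False by (simp add: mult_le_0_iff)
qed

lemma sumsq_zero:
  assumes "finite S" "(\<Sum>i\<in>S. x i * x i) = (0::real)"
  shows "\<forall>i\<in>S. x i = 0"
  using assms sum_nonneg_eq_0_iff[of S "\<lambda>i. x i * x i"] by auto

primrec opl :: "'v set \<Rightarrow> ('v \<Rightarrow> 'v \<Rightarrow> real) \<Rightarrow> real list \<Rightarrow> ('v \<Rightarrow> real) \<Rightarrow> 'v \<Rightarrow> real" where
  "opl S A [] z = z"
| "opl S A (t # ts) z = (\<lambda>i. mat_vec S A (opl S A ts z) i - t * opl S A ts z i)"

locale symmat =
  fixes S :: "'v set" and A :: "'v \<Rightarrow> 'v \<Rightarrow> real"
  assumes finS: "finite S"
    and symA: "\<And>i j. A i j = A j i"
    and suppA: "\<And>i j. A i j \<noteq> 0 \<Longrightarrow> i \<in> S \<and> j \<in> S"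
begin

abbreviation mv where "mv x \<equiv> mat_vec S A x"
abbreviation ip where "ip x y \<equiv> inner_S S x y"

lemma A_out: "i \<notin> S \<or> j \<notin> S \<Longrightarrow> A i j = 0" using suppA by blast

lemma mv_supp: "supported S (mv x)"
  unfolding supported_def mat_vec_def using A_out by auto

lemma ip_sym: "ip x y = ip y x" unfolding inner_S_def by (simp add: mult.commute)

lemma mv_sym: "ip u (mv x) = ip (mv u) x"
proof -
  have "ip u (mv x) = (\<Sum>i\<in>S. \<Sum>j\<in>S. u i * A i j * x j)"
    unfolding inner_S_def mat_vec_def by (simp add: sum_distrib_left mult.assoc)
  also have "\<dots> = (\<Sum>j\<in>S. \<Sum>i\<in>S. u i * A i j * x j)" by (rule sum.swap)
  also have "\<dots> = (\<Sum>j\<in>S. (\<Sum>i\<in>S. A j i * u i) * x j)"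
    apply (rule sum.cong[OF refl])
    apply (simp add: sum_distrib_right)
    apply (rule sum.cong[OF refl])
    apply (subst symA)
    apply (simp add: mult_ac)
    done
  also have "\<dots> = ip (mv u) x"
    unfolding inner_S_def mat_vec_def by simp
  finally show ?thesis .
qed

lemma eigD: "x \<in> eigenspace S A \<theta> \<Longrightarrow> i \<in> S \<Longrightarrow> mv x i = \<theta> * x i"
  unfolding eigenspace_def by auto

lemma eig_supp: "x \<in> eigenspace S A \<theta> \<Longrightarrow> supported S x"
  unfolding eigenspace_def by auto

lemma ip_eig: "x \<in> eigenspace S A \<theta> \<Longrightarrow> ip x (mv y) = \<theta> * ip x y"
proof -
  assume x: "x \<in> eigenspace S A \<theta>"
  have "ip x (mv y) = ip (mv x) y" by (rule mv_sym)
  also have "\<dots> = \<theta> * ip x y" unfolding inner_S_def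
    by (simp add: eigD[OF x] sum_distrib_left mult.assoc cong: sum.cong)
  finally show ?thesis .
qed

lemma ip_zero_imp: "ip x x = 0 \<Longrightarrow> \<forall>i\<in>S. x i = 0"
  using sumsq_zero[OF finS] unfolding inner_S_def by blast

lemma ip_nonneg: "ip x x \<ge> 0" unfolding inner_S_def by (intro sum_nonneg) auto

lemma ip_pos: "i \<in> S \<Longrightarrow> x i \<noteq> 0 \<Longrightarrow> ip x x > 0"
proof -
  assume i: "i \<in> S" "x i \<noteq> 0"
  have "ip x x \<ge> 0" unfolding inner_S_def by (intro sum_nonneg) auto
  moreover have "ip x x \<noteq> 0" using ip_zero_imp i by blast
  ultimately show ?thesis by simp
qed

lemma mv_lin: "mv (\<lambda>i. x i + s * w i) = (\<lambda>i. mv x i + s * mv w i)"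
  unfolding mat_vec_def by (auto simp: fun_eq_iff algebra_simps sum.distrib sum_distrib_left)

lemma ip_lin2: "ip (\<lambda>i. x i + s * w i) (\<lambda>i. a i + s * b i)
   = ip x a + s * ip x b + s * ip w a + s^2 * ip w b"
  unfolding inner_S_def
  by (simp add: algebra_simps sum.distrib sum_distrib_left power2_eq_square)

lemma R_expand: "ip (\<lambda>i. x i + s * w i) (mv (\<lambda>i. x i + s * w i))
   = ip x (mv x) + 2 * s * ip w (mv x) + s^2 * ip w (mv w)"
proof -
  have "ip x (mv w) = ip w (mv x)" using mv_sym ip_sym by metis
  then show ?thesis unfolding mv_lin ip_lin2 by simp
qed

definition Ev where "Ev = {x. supported S x \<and> (\<forall>\<theta>. \<forall>u\<in>eigenspace S A \<theta>. ip u x = 0)}"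

lemma zero_eig: "(\<lambda>_. 0) \<in> eigenspace S A \<theta>"
  unfolding eigenspace_def supported_def mat_vec_def by auto

lemma cont_proj: "i \<in> S \<Longrightarrow> continuous_map (product_topology (\<lambda>_. euclideanreal) S) euclideanreal (\<lambda>x. x i)"
  using continuous_map_product_projection[of i S "\<lambda>_. euclideanreal"] by simp

lemma complete0:
  assumes y: "y \<in> Ev" shows "\<forall>i\<in>S. y i = 0"
proof (rule ccontr)
  assume "\<not> ?thesis" then obtain i0 where i0: "i0 \<in> S" "y i0 \<noteq> 0" by auto
  define X where "X = product_topology (\<lambda>_::'v. euclideanreal) S"
  define U where "U = (\<Union>\<theta>. eigenspace S A \<theta>)"
  define f where "f x = (\<Sum>i\<in>S. x i * x i)" for x :: "'v \<Rightarrow> real"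
  define g where "g u x = (\<Sum>i\<in>S. u i * x i)" for u x :: "'v \<Rightarrow> real"
  define K where "K = {x \<in> topspace X. f x \<in> {1}} \<inter> \<Inter> ((\<lambda>u. {x \<in> topspace X. g u x \<in> {0}}) ` U)"
  define R where "R x = ip x (mv x)" for x
  have contf: "continuous_map X euclideanreal f" unfolding f_def X_def
    by (intro continuous_map_sum finS continuous_map_real_mult cont_proj)
  have contg: "continuous_map X euclideanreal (g u)" for u unfolding g_def X_def
    by (intro continuous_map_sum finS continuous_map_real_mult cont_proj continuous_map_canonical_const)
  have contR: "continuous_map X euclideanreal R" unfolding R_def X_def inner_S_def mat_vec_def
    by (intro continuous_map_sum finS continuous_map_real_mult cont_proj continuous_map_canonical_const)
  have U_ne: "U \<noteq> {}" unfolding U_def using zero_eig by blast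
  have c1: "closedin X {x \<in> topspace X. f x \<in> {1}}"
    by (rule closedin_continuous_map_preimage[OF contf]) simp
  have c2: "closedin X {x \<in> topspace X. g u x = 0}" for u
    using closedin_continuous_map_preimage[OF contg, of "{0}"] by simp
  have Kclosed: "closedin X K" unfolding K_def
    using c2 by (intro closedin_Int closedin_Inter c1) (auto simp: U_ne)
  define B where "B = PiE S (\<lambda>_. {-1..1::real})"
  have Bcpt: "compactin X B" unfolding X_def B_def by (simp add: compactin_PiE)
  have Kmem: "x \<in> K \<longleftrightarrow> x \<in> extensional S \<and> f x = 1 \<and> (\<forall>u\<in>U. g u x = 0)" for x
    unfolding K_def X_def by (auto simp: PiE_def)
  have KB: "K \<subseteq> B"
  proof
    fix x assume "x \<in> K"
    hence x: "x \<in> extensional S" "f x = 1" using Kmem by auto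
    have "\<bar>x i\<bar> \<le> 1" if "i \<in> S" for i
    proof -
      have "x i * x i \<le> f x" unfolding f_def
        by (rule member_le_sum[OF that _ finS]) auto
      thus ?thesis using x abs_square_le_1[of "x i"] by (simp add: power2_eq_square)
    qed
    then show "x \<in> B" unfolding B_def using x by (auto simp: PiE_def abs_le_iff)
  qed
  have Kcpt: "compactin X K" by (rule closed_compactin[OF Bcpt KB Kclosed])
  have cptimg: "compact (R ` K)" using image_compactin[OF Kcpt contR] by simp
  have yEv: "supported S y" "\<And>u \<theta>. u \<in> eigenspace S A \<theta> \<Longrightarrow> ip u y = 0"
    using y unfolding Ev_def by auto
  have norm_in_K: "restrict (\<lambda>i. z i / sqrt (ip z z)) S \<in> K"
    if z: "ip z z > 0" "\<And>u \<theta>. u \<in> eigenspace S A \<theta> \<Longrightarrow> ip u z = 0" for z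
  proof -
    define c where "c = sqrt (ip z z)"
    have c: "c > 0" "c * c = ip z z" using z(1) unfolding c_def by auto
    have "f (restrict (\<lambda>i. z i / c) S) = ip z z / (c * c)"
      unfolding f_def inner_S_def by (simp add: sum_divide_distrib)
    hence f1: "f (restrict (\<lambda>i. z i / c) S) = 1" using c z(1) by simp
    have "g u (restrict (\<lambda>i. z i / c) S) = ip u z / c" for u
      unfolding g_def inner_S_def by (simp add: sum_divide_distrib)
    hence "g u (restrict (\<lambda>i. z i / c) S) = 0" if "u \<in> U" for u
      using z(2) that unfolding U_def by auto
    thus ?thesis using f1 Kmem unfolding c_def by auto
  qed
  have Kne: "K \<noteq> {}" using norm_in_K[of y] yEv ip_pos[of i0 y] i0 by blast
  obtain xs where xs: "xs \<in> K" "\<And>x. x \<in> K \<Longrightarrow> R x \<le> R xs"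
    using compact_attains_sup[OF cptimg] Kne by auto
  define M where "M = R xs"
  define xb where "xb = (\<lambda>i. if i \<in> S then xs i else 0)"
  have xb_supp: "supported S xb" unfolding xb_def supported_def by auto
  have mv_xb: "mv xb = mv xs" unfolding xb_def mat_vec_def by (auto simp: fun_eq_iff)
  have R_xb: "R xb = M" unfolding M_def R_def mv_xb unfolding xb_def inner_S_def by simp
  have n_xb: "ip xb xb = 1" using xs(1) Kmem unfolding f_def xb_def inner_S_def by simp
  have orth_xb: "ip u xb = 0" if "u \<in> eigenspace S A \<theta>" for u \<theta>
    using xs(1) Kmem that unfolding g_def xb_def inner_S_def U_def by auto
  have Rle: "R z \<le> M * ip z z"
    if z: "\<And>u \<theta>. u \<in> eigenspace S A \<theta> \<Longrightarrow> ip u z = 0" for z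
  proof (cases "ip z z = 0")
    case True
    hence "\<forall>i\<in>S. z i = 0" by (rule ip_zero_imp)
    hence "R z = 0" unfolding R_def inner_S_def by simp
    thus ?thesis using True by simp
  next
    case False
    have pos: "ip z z > 0" using False ip_nonneg[of z] by simp
    define c where "c = sqrt (ip z z)"
    have c: "c > 0" "c * c = ip z z" using pos unfolding c_def by auto
    have "R (restrict (\<lambda>i. z i / c) S) \<le> M"
      using xs(2)[OF norm_in_K[OF pos z]] unfolding M_def c_def .
    moreover have "R (restrict (\<lambda>i. z i / c) S) = R z / (c * c)"
    proof -
      have "R (restrict (\<lambda>i. z i / c) S) = (\<Sum>i\<in>S. z i * (\<Sum>j\<in>S. A i j * z j) / (c * c))"
        unfolding R_def inner_S_def mat_vec_def
      proof (rule sum.cong[OF refl])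
        fix i assume "i \<in> S"
        have "(\<Sum>j\<in>S. A i j * restrict (\<lambda>i. z i / c) S j) = (\<Sum>j\<in>S. A i j * z j) / c"
          by (simp add: sum_divide_distrib)
        thus "restrict (\<lambda>i. z i / c) S i * (\<Sum>j\<in>S. A i j * restrict (\<lambda>i. z i / c) S j)
          = z i * (\<Sum>j\<in>S. A i j * z j) / (c * c)" using \<open>i \<in> S\<close> by simp
      qed
      also have "\<dots> = R z / (c * c)" unfolding R_def inner_S_def mat_vec_def
        by (simp add: sum_divide_distrib)
      finally show ?thesis .
    qed
    ultimately have "R z / ip z z \<le> M" using c by simp
    thus ?thesis using pos by (simp add: divide_le_eq mult.commute)
  qed
  have stat: "ip w (mv xb) = M * ip w xb"
    if w: "\<And>u \<theta>. u \<in> eigenspace S A \<theta> \<Longrightarrow> ip u w = 0" for w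
  proof -
    have "2 * s * (ip w (mv xb) - M * ip w xb) + s^2 * (R w - M * ip w w) \<le> 0" for s
    proof -
      have zo: "ip u (\<lambda>i. xb i + s * w i) = 0" if "u \<in> eigenspace S A \<theta>" for u \<theta>
        using orth_xb[OF that] w[OF that] unfolding inner_S_def
        by (simp add: sum.distrib sum_distrib_left[symmetric] algebra_simps)
      have "R (\<lambda>i. xb i + s * w i) \<le> M * ip (\<lambda>i. xb i + s * w i) (\<lambda>i. xb i + s * w i)"
        by (rule Rle) (rule zo)
      also have "ip (\<lambda>i. xb i + s * w i) (\<lambda>i. xb i + s * w i) = 1 + 2 * s * ip w xb + s^2 * ip w w"
        using ip_lin2[of xb s w xb w] n_xb ip_sym[of xb w] by simp
      finally show ?thesis unfolding R_def R_expand using R_xb[unfolded R_def]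
        by (simp add: algebra_simps)
    qed
    then show ?thesis using quad_nonpos_lin_zero[of "ip w (mv xb) - M * ip w xb" "R w - M * ip w w"] by simp
  qed
  define w where "w = (\<lambda>i. mv xb i - M * xb i)"
  have w_orth: "ip u w = 0" if "u \<in> eigenspace S A \<theta>" for u \<theta>
  proof -
    have "ip u w = ip u (mv xb) - M * ip u xb" unfolding w_def inner_S_def
      by (simp add: algebra_simps sum_subtractf sum_distrib_left)
    also have "\<dots> = 0" using ip_eig[OF that] orth_xb[OF that] by simp
    finally show ?thesis .
  qed
  have "ip w (\<lambda>i. mv xb i - M * xb i) = ip w (mv xb) - M * ip w xb" unfolding inner_S_def
    by (simp add: sum_subtractf sum_distrib_left right_diff_distrib mult_ac)
  hence "ip w w = ip w (mv xb) - M * ip w xb" by (simp only: w_def[symmetric])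
  hence "ip w w = 0" using stat[OF w_orth] by simp
  hence "\<forall>i\<in>S. w i = 0" by (rule ip_zero_imp)
  hence "xb \<in> eigenspace S A M" unfolding eigenspace_def w_def using xb_supp by auto
  hence "ip xb xb = 0" by (rule orth_xb)
  thus False using n_xb by simp
qed

lemma eig_orth:
  assumes "x \<in> eigenspace S A \<theta>" "y \<in> eigenspace S A \<mu>" "\<theta> \<noteq> \<mu>"
  shows "ip x y = 0"
proof -
  have "ip x (mv y) = ip y (mv x)" by (subst mv_sym, rule ip_sym)
  hence "\<mu> * ip x y = ip x (mv y)" using ip_eig[OF assms(2), of x] ip_sym[of y x] by simp
  also have "\<dots> = \<theta> * ip x y" by (rule ip_eig[OF assms(1)])
  finally show ?thesis using assms(3) by simp
qed

lemma spectrum_iff: "\<theta> \<in> spectrum S A \<longleftrightarrow> (\<exists>x \<in> eigenspace S A \<theta>. \<exists>i \<in> S. x i \<noteq> 0)"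
  unfolding spectrum_def by simp

lemma not_spec_zero: "\<theta> \<notin> spectrum S A \<Longrightarrow> x \<in> eigenspace S A \<theta> \<Longrightarrow> i \<in> S \<Longrightarrow> x i = 0"
  unfolding spectrum_def by auto
lemma supported_span:
  assumes "supported S x"
  shows "x \<in> fv.span ((\<lambda>j. unit_vec j :: 'v \<Rightarrow> real) ` S)"
proof -
  have "x i = (\<Sum>j\<in>S. x j * unit_vec j i)" for i
  proof -
    have "(\<Sum>j\<in>S. x j * unit_vec j i) = (\<Sum>j\<in>S. if i = j then x j else 0)"
      by (rule sum.cong) (auto simp: unit_vec_def)
    thus ?thesis using assms finS unfolding supported_def by auto
  qed
  note xi = this
  have "x = (\<Sum>j\<in>S. (\<lambda>i. x j * unit_vec j i))"
  proof (rule ext)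
    fix i show "x i = (\<Sum>j\<in>S. (\<lambda>i. x j * unit_vec j i)) i"
      unfolding fun_sum_apply by (rule xi)
  qed
  also have "\<dots> \<in> fv.span ((\<lambda>j. unit_vec j) ` S)"
    by (intro fv.span_sum fv.span_scale fv.span_base) auto
  finally show ?thesis .
qed


lemma finite_spec: "finite (spectrum S A)"
proof -
  define ev where "ev \<theta> = (SOME x. x \<in> eigenspace S A \<theta> \<and> (\<exists>i\<in>S. x i \<noteq> 0))" for \<theta>
  have ev: "ev \<theta> \<in> eigenspace S A \<theta>" "\<exists>i\<in>S. ev \<theta> i \<noteq> 0" if "\<theta> \<in> spectrum S A" for \<theta>
  proof -
    have "\<exists>x. x \<in> eigenspace S A \<theta> \<and> (\<exists>i\<in>S. x i \<noteq> 0)" using that spectrum_iff by blast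
    from someI_ex[OF this] show "ev \<theta> \<in> eigenspace S A \<theta>" "\<exists>i\<in>S. ev \<theta> i \<noteq> 0"
      unfolding ev_def by auto
  qed
  have inj: "inj_on ev (spectrum S A)"
  proof (rule inj_onI)
    fix \<theta> \<mu> assume th: "\<theta> \<in> spectrum S A" "\<mu> \<in> spectrum S A" "ev \<theta> = ev \<mu>"
    obtain i where i: "i \<in> S" "ev \<theta> i \<noteq> 0" using ev(2)[OF th(1)] by auto
    have "\<theta> * ev \<theta> i = \<mu> * ev \<theta> i" using eigD[OF ev(1)[OF th(1)] i(1)] eigD[OF ev(1)[OF th(2)] i(1)] th(3)
      by metis
    thus "\<theta> = \<mu>" using i(2) by simp
  qed
  define T where "T = ev ` spectrum S A"
  have span: "T \<subseteq> fv.span ((\<lambda>j. unit_vec j :: 'v \<Rightarrow> real) ` S)"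
    unfolding T_def using supported_span eig_supp ev(1) by blast
  have indep: "fv.independent T"
    unfolding fv.independent_explicit_module
  proof (intro allI impI)
    fix t u v assume tv: "finite t" "t \<subseteq> T" "(\<Sum>v\<in>t. (\<lambda>i. u v * v i)) = 0" "v \<in> t"
    have z: "(\<Sum>v'\<in>t. u v' * v' i) = 0" for i
      using fun_cong[OF tv(3), of i] by (simp add: fun_sum_apply)
    obtain \<theta> where th: "\<theta> \<in> spectrum S A" "v = ev \<theta>" using tv(2,4) unfolding T_def by auto
    have orth: "ip v v' = 0" if vt: "v' \<in> t" "v' \<noteq> v" for v'
    proof -
      obtain \<mu> where mu: "\<mu> \<in> spectrum S A" "v' = ev \<mu>" using tv(2) vt(1) unfolding T_def by auto
      have "\<theta> \<noteq> \<mu>" using vt th mu by auto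
      thus ?thesis using eig_orth[OF ev(1)[OF th(1)] ev(1)[OF mu(1)]] th mu by simp
    qed
    have "0 = (\<Sum>i\<in>S. v i * (\<Sum>v'\<in>t. u v' * v' i))" using z by simp
    also have "\<dots> = (\<Sum>i\<in>S. \<Sum>v'\<in>t. u v' * (v i * v' i))"
      by (simp add: sum_distrib_left mult_ac)
    also have "\<dots> = (\<Sum>v'\<in>t. \<Sum>i\<in>S. u v' * (v i * v' i))" by (rule sum.swap)
    also have "\<dots> = (\<Sum>v'\<in>t. u v' * ip v v')"
      unfolding inner_S_def by (simp add: sum_distrib_left)
    also have "\<dots> = u v * ip v v + (\<Sum>v'\<in>t - {v}. u v' * ip v v')"
      using tv(1,4) by (simp add: sum.remove)
    also have "(\<Sum>v'\<in>t - {v}. u v' * ip v v') = 0" using orth by (intro sum.neutral) auto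
    finally have "u v * ip v v = 0" by simp
    moreover have "ip v v > 0" using ev(2)[OF th(1)] ip_pos th(2) by blast
    ultimately show "u v = 0" by simp
  qed
  have "finite T" using fv.independent_span_bound[OF _ indep span] finS by auto
  thus ?thesis using finite_imageD[OF _ inj] unfolding T_def by blast
qed

abbreviation op where "op ts z \<equiv> opl S A ts z"

lemma op_eig: "x \<in> eigenspace S A \<theta> \<Longrightarrow> i \<in> S \<Longrightarrow> op ts x i = (\<Prod>t\<leftarrow>ts. \<theta> - t) * x i"
proof (induction ts arbitrary: i)
  case Nil then show ?case by simp
next
  case (Cons t ts)
  have "mv (op ts x) i = (\<Sum>j\<in>S. A i j * ((\<Prod>t\<leftarrow>ts. \<theta> - t) * x j))"
    unfolding mat_vec_def using Cons by (intro sum.cong) auto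
  also have "\<dots> = (\<Prod>t\<leftarrow>ts. \<theta> - t) * mv x i" unfolding mat_vec_def
    by (simp add: sum_distrib_left mult_ac)
  finally show ?case using Cons eigD[OF Cons(2,3)] by (simp add: algebra_simps)
qed

lemma op_ip: "u \<in> eigenspace S A \<theta> \<Longrightarrow> ip u (op ts y) = (\<Prod>t\<leftarrow>ts. \<theta> - t) * ip u y"
proof (induction ts)
  case Nil then show ?case by simp
next
  case (Cons t ts)
  have "ip u (op (t # ts) y) = ip u (mv (op ts y)) - t * ip u (op ts y)"
    unfolding inner_S_def by (simp add: algebra_simps sum_subtractf sum_distrib_left)
  also have "\<dots> = (\<theta> - t) * ip u (op ts y)" using ip_eig[OF Cons(2)] by (simp add: algebra_simps)
  finally show ?case using Cons by simp
qed

lemma op_supp: "supported S z \<Longrightarrow> supported S (op ts z)"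
proof (induction ts)
  case Nil then show ?case by simp
next
  case (Cons t ts)
  then show ?case using mv_supp[of "op ts z"] unfolding supported_def by simp
qed

lemma op_cong: "(\<And>k. k \<in> S \<Longrightarrow> z k = z' k) \<Longrightarrow> i \<in> S \<Longrightarrow> op ts z i = op ts z' i"
proof (induction ts arbitrary: i)
  case Nil then show ?case by simp
next
  case (Cons t ts)
  have "mv (op ts z) i = mv (op ts z') i" unfolding mat_vec_def using Cons by (intro sum.cong) auto
  then show ?case using Cons by simp
qed

lemma mv_sum: "finite J \<Longrightarrow> mv (\<lambda>k. \<Sum>j\<in>J. c j * g j k) i = (\<Sum>j\<in>J. c j * mv (g j) i)"
proof -
  assume J: "finite J"
  have "mv (\<lambda>k. \<Sum>j\<in>J. c j * g j k) i = (\<Sum>l\<in>S. \<Sum>j\<in>J. A i l * (c j * g j l))"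
    unfolding mat_vec_def by (simp add: sum_distrib_left)
  also have "\<dots> = (\<Sum>j\<in>J. \<Sum>l\<in>S. A i l * (c j * g j l))" by (rule sum.swap)
  also have "\<dots> = (\<Sum>j\<in>J. c j * mv (g j) i)" unfolding mat_vec_def
    by (simp add: sum_distrib_left mult_ac)
  finally show ?thesis .
qed

lemma op_lin: "finite J \<Longrightarrow> op ts (\<lambda>k. \<Sum>j\<in>J. c j * g j k) = (\<lambda>k. \<Sum>j\<in>J. c j * op ts (g j) k)"
proof (induction ts)
  case Nil then show ?case by simp
next
  case (Cons t ts)
  show ?case
    by (simp add: Cons mv_sum[OF Cons(2)] fun_eq_iff sum_subtractf sum_distrib_left algebra_simps)
qed

lemma op_q:
  assumes y: "supported S y" and ts: "spectrum S A \<subseteq> set ts"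
  shows "\<forall>i\<in>S. op ts y i = 0"
proof (rule complete0)
  show "op ts y \<in> Ev" unfolding Ev_def
  proof (intro CollectI conjI allI ballI)
    show "supported S (op ts y)" by (rule op_supp[OF y])
    fix \<mu> u assume u: "u \<in> eigenspace S A \<mu>"
    show "ip u (op ts y) = 0"
    proof (cases "\<mu> \<in> spectrum S A")
      case True
      hence "(\<Prod>t\<leftarrow>ts. \<mu> - t) = 0" using ts by (auto simp: prod_list_zero_iff)
      thus ?thesis using op_ip[OF u] by simp
    next
      case False
      hence "\<forall>i\<in>S. u i = 0" using not_spec_zero[OF False u] by blast
      thus ?thesis unfolding inner_S_def by simp
    qed
  qed
qed

definition tsl where "tsl \<theta> = sorted_list_of_set (spectrum S A - {\<theta>})"
definition cc where "cc \<theta> = (\<Prod>t\<leftarrow>tsl \<theta>. \<theta> - t)"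
definition Pop where "Pop \<theta> y = (\<lambda>i. if i \<in> S \<and> \<theta> \<in> spectrum S A then op (tsl \<theta>) y i / cc \<theta> else 0)"
definition Pm where "Pm \<theta> = (\<lambda>i j. if i \<in> S \<and> j \<in> S then Pop \<theta> (unit_vec j) i else 0)"

lemma set_tsl: "set (tsl \<theta>) = spectrum S A - {\<theta>}"
  unfolding tsl_def using finite_spec by simp

lemma cc_nz: "cc \<theta> \<noteq> 0"
  unfolding cc_def using set_tsl by (auto simp: prod_list_zero_iff)

lemma unit_vec_sum: "i \<in> S \<Longrightarrow> (\<Sum>j\<in>S. y j * unit_vec j i) = (y i :: real)"
proof -
  assume i: "i \<in> S"
  have "(\<Sum>j\<in>S. y j * unit_vec j i) = (\<Sum>j\<in>S. if i = j then y j else 0)"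
    by (rule sum.cong) (auto simp: unit_vec_def)
  thus ?thesis using i finS by simp
qed

lemma Pm_mv: "mat_vec S (Pm \<theta>) y i = Pop \<theta> y i"
proof (cases "i \<in> S \<and> \<theta> \<in> spectrum S A")
  case True
  have "mat_vec S (Pm \<theta>) y i = (\<Sum>j\<in>S. y j * op (tsl \<theta>) (unit_vec j) i) / cc \<theta>"
    unfolding mat_vec_def Pm_def Pop_def using True
    by (simp add: sum_divide_distrib mult_ac)
  also have "(\<Sum>j\<in>S. y j * op (tsl \<theta>) (unit_vec j) i) = op (tsl \<theta>) (\<lambda>k. \<Sum>j\<in>S. y j * unit_vec j k) i"
    using op_lin[OF finS, of "tsl \<theta>" y "\<lambda>j. unit_vec j"] by simp
  also have "\<dots> = op (tsl \<theta>) y i"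
    by (rule op_cong) (use True unit_vec_sum in auto)
  finally show ?thesis unfolding Pop_def using True by simp
next
  case False
  hence "Pm \<theta> i j = 0" for j unfolding Pm_def Pop_def by auto
  moreover have "Pop \<theta> y i = 0" using False unfolding Pop_def by auto
  ultimately show ?thesis unfolding mat_vec_def by simp
qed

lemma PP1: "x \<in> eigenspace S A \<theta> \<Longrightarrow> i \<in> S \<Longrightarrow> Pop \<theta> x i = x i"
proof -
  assume x: "x \<in> eigenspace S A \<theta>" and i: "i \<in> S"
  show ?thesis
  proof (cases "\<theta> \<in> spectrum S A")
    case True
    then show ?thesis unfolding Pop_def using op_eig[OF x i, of "tsl \<theta>"] cc_nz[of \<theta>] i
      by (simp add: cc_def)
  next
    case False
    then show ?thesis unfolding Pop_def using not_spec_zero[OF False x i] by simp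
  qed
qed

lemma PP2: "supported S y \<Longrightarrow> Pop \<theta> y \<in> eigenspace S A \<theta>"
proof (cases "\<theta> \<in> spectrum S A")
  case False
  hence "Pop \<theta> y = (\<lambda>_. 0)" unfolding Pop_def by auto
  then show ?thesis using zero_eig by simp
next
  case True
  assume y: "supported S y"
  have "\<forall>i\<in>S. op (\<theta> # tsl \<theta>) y i = 0"
    by (rule op_q[OF y]) (use set_tsl in auto)
  hence q: "mv (op (tsl \<theta>) y) i = \<theta> * op (tsl \<theta>) y i" if "i \<in> S" for i using that by simp
  have "mv (Pop \<theta> y) i = \<theta> * Pop \<theta> y i" if i: "i \<in> S" for i
  proof -
    have "mv (Pop \<theta> y) i = (\<Sum>j\<in>S. A i j * op (tsl \<theta>) y j) / cc \<theta>"
      unfolding mat_vec_def Pop_def using True by (simp add: sum_divide_distrib)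
    also have "\<dots> = \<theta> * op (tsl \<theta>) y i / cc \<theta>" using q[OF i] unfolding mat_vec_def by simp
    finally show ?thesis unfolding Pop_def using True i by simp
  qed
  moreover have "supported S (Pop \<theta> y)" unfolding Pop_def supported_def by auto
  ultimately show ?thesis unfolding eigenspace_def by auto
qed

lemma PP3: "x \<in> eigenspace S A \<theta> \<Longrightarrow> ip x (Pop \<theta> y) = ip x y"
proof -
  assume x: "x \<in> eigenspace S A \<theta>"
  show ?thesis
  proof (cases "\<theta> \<in> spectrum S A")
    case True
    have "ip x (Pop \<theta> y) = ip x (op (tsl \<theta>) y) / cc \<theta>"
      unfolding Pop_def inner_S_def using True by (simp add: sum_divide_distrib)
    also have "\<dots> = ip x y" using op_ip[OF x, of "tsl \<theta>" y] cc_nz[of \<theta>] by (simp add: cc_def)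
    finally show ?thesis .
  next
    case False
    then show ?thesis unfolding inner_S_def using not_spec_zero[OF False x] by simp
  qed
qed

lemma mv_gen_add: "mat_vec S P (\<lambda>k. z k + w k) i = mat_vec S P z i + mat_vec S P w i"
  unfolding mat_vec_def by (simp add: algebra_simps sum.distrib)

lemma eig_proj_eq: "eig_proj S A \<theta> = Pm \<theta>"
  unfolding eig_proj_def
proof (rule the_equality)
  let ?E = "eigenspace S A \<theta>"
  show "(\<forall>i j. Pm \<theta> i j \<noteq> 0 \<longrightarrow> i \<in> S \<and> j \<in> S) \<and>
    (\<forall>x\<in>?E. \<forall>i\<in>S. mat_vec S (Pm \<theta>) x i = x i) \<and>
    (\<forall>y. supported S y \<and> (\<forall>x\<in>?E. inner_S S x y = 0) \<longrightarrow> (\<forall>i\<in>S. mat_vec S (Pm \<theta>) y i = 0))"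
  proof (intro conjI allI impI ballI)
    show "Pm \<theta> i j \<noteq> 0 \<Longrightarrow> i \<in> S" "Pm \<theta> i j \<noteq> 0 \<Longrightarrow> j \<in> S" for i j
      unfolding Pm_def by (auto split: if_splits)
    show "mat_vec S (Pm \<theta>) x i = x i" if "x \<in> ?E" "i \<in> S" for x i
      using PP1[OF that] Pm_mv by simp
    fix y i assume y: "supported S y \<and> (\<forall>x\<in>?E. inner_S S x y = 0)" and i: "i \<in> S"
    have z: "Pop \<theta> y \<in> ?E" using PP2 y by blast
    have "ip (Pop \<theta> y) (Pop \<theta> y) = 0" using PP3[OF z, of y] y z by simp
    hence "\<forall>i\<in>S. Pop \<theta> y i = 0" by (rule ip_zero_imp)
    thus "mat_vec S (Pm \<theta>) y i = 0" using Pm_mv i by simp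
  qed
next
  let ?E = "eigenspace S A \<theta>"
  fix P assume P: "(\<forall>i j. P i j \<noteq> 0 \<longrightarrow> i \<in> S \<and> j \<in> S) \<and>
    (\<forall>x\<in>?E. \<forall>i\<in>S. mat_vec S P x i = x i) \<and>
    (\<forall>y. supported S y \<and> (\<forall>x\<in>?E. inner_S S x y = 0) \<longrightarrow> (\<forall>i\<in>S. mat_vec S P y i = 0))"
  show "P = Pm \<theta>"
  proof (intro ext)
    fix i j
    show "P i j = Pm \<theta> i j"
    proof (cases "i \<in> S \<and> j \<in> S")
      case False
      then show ?thesis using P unfolding Pm_def by auto
    next
      case True
      define e where "e = (unit_vec j :: 'v \<Rightarrow> real)"
      have e_supp: "supported S e" unfolding e_def supported_def unit_vec_def using True by auto
      define z where "z = Pop \<theta> e"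
      define w where "w = (\<lambda>k. e k - z k)"
      have z: "z \<in> ?E" unfolding z_def using PP2[OF e_supp] .
      have w_supp: "supported S w" using e_supp eig_supp[OF z] unfolding w_def supported_def by auto
      have w_orth: "\<forall>x\<in>?E. inner_S S x w = 0"
      proof
        fix x assume x: "x \<in> ?E"
        have "ip x w = ip x e - ip x z" unfolding w_def inner_S_def
          by (simp add: algebra_simps sum_subtractf)
        thus "ip x w = 0" using PP3[OF x, of e] unfolding z_def by simp
      qed
      have "mat_vec S P e i = (\<Sum>k\<in>S. if k = j then P i k else 0)"
        unfolding mat_vec_def e_def by (rule sum.cong) (auto simp: unit_vec_def)
      also have "\<dots> = P i j" using True finS by simp
      also have "e = (\<lambda>k. z k + w k)" unfolding w_def by simp
      also have "mat_vec S P (\<lambda>k. z k + w k) i = mat_vec S P z i + mat_vec S P w i" by (rule mv_gen_add)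
      also have "mat_vec S P z i = z i" using P z True by blast
      also have "mat_vec S P w i = 0" using P w_supp w_orth True by blast
      finally show ?thesis unfolding Pm_def z_def e_def using True by simp
    qed
  qed
qed

theorem proj_eig: "supported S y \<Longrightarrow> mat_vec S (eig_proj S A \<theta>) y \<in> eigenspace S A \<theta>"
proof -
  assume y: "supported S y"
  have "mat_vec S (eig_proj S A \<theta>) y = Pop \<theta> y" unfolding eig_proj_eq by (rule ext) (rule Pm_mv)
  thus ?thesis using PP2[OF y] by simp
qed

theorem proj_nonspec: "\<theta> \<notin> spectrum S A \<Longrightarrow> eig_proj S A \<theta> = (\<lambda>i j. 0)"
  unfolding eig_proj_eq Pm_def Pop_def by (auto simp: fun_eq_iff)

theorem spec_decomp:
  assumes y: "supported S y" and i: "i \<in> S"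
  shows "y i = (\<Sum>\<theta>\<in>spectrum S A. mat_vec S (eig_proj S A \<theta>) y i)"
proof -
  define r where "r = (\<lambda>k. y k - (\<Sum>\<theta>\<in>spectrum S A. Pop \<theta> y k))"
  have "r \<in> Ev" unfolding Ev_def
  proof (intro CollectI conjI allI ballI)
    show "supported S r" using y unfolding r_def supported_def Pop_def by auto
    fix \<mu> u assume u: "u \<in> eigenspace S A \<mu>"
    show "ip u r = 0"
    proof (cases "\<mu> \<in> spectrum S A")
      case False
      hence "\<forall>i\<in>S. u i = 0" using not_spec_zero[OF False u] by blast
      thus ?thesis unfolding inner_S_def by simp
    next
      case True
      have "ip u r = ip u y - (\<Sum>\<theta>\<in>spectrum S A. ip u (Pop \<theta> y))"
        unfolding r_def inner_S_def
        by (simp add: algebra_simps sum_subtractf sum_distrib_left sum.swap[of _ S])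
      also have "(\<Sum>\<theta>\<in>spectrum S A. ip u (Pop \<theta> y)) = ip u (Pop \<mu> y) + (\<Sum>\<theta>\<in>spectrum S A - {\<mu>}. ip u (Pop \<theta> y))"
        using True finite_spec by (simp add: sum.remove)
      also have "(\<Sum>\<theta>\<in>spectrum S A - {\<mu>}. ip u (Pop \<theta> y)) = 0"
      proof (intro sum.neutral ballI)
        fix \<theta> assume th: "\<theta> \<in> spectrum S A - {\<mu>}"
        have "ip u (Pop \<theta> y) = ip u (op (tsl \<theta>) y) / cc \<theta>"
          unfolding Pop_def inner_S_def using th by (simp add: sum_divide_distrib)
        also have "(\<Prod>t\<leftarrow>tsl \<theta>. \<mu> - t) = 0" using set_tsl[of \<theta>] th True
          by (auto simp: prod_list_zero_iff)
        hence "ip u (op (tsl \<theta>) y) = 0" using op_ip[OF u] by simp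
        finally show "ip u (Pop \<theta> y) = 0" by simp
      qed
      also have "ip u (Pop \<mu> y) = ip u y" by (rule PP3[OF u])
      finally show ?thesis by simp
    qed
  qed
  hence "r i = 0" using complete0 i by blast
  hence "y i = (\<Sum>\<theta>\<in>spectrum S A. Pop \<theta> y i)" unfolding r_def by simp
  also have "\<dots> = (\<Sum>\<theta>\<in>spectrum S A. mat_vec S (eig_proj S A \<theta>) y i)"
    unfolding eig_proj_eq Pm_mv ..
  finally show ?thesis .
qed

end



section \<open>Matrix exponential on eigenvectors\<close>

lemma mat_pow_eig:
  fixes M :: "'v \<Rightarrow> 'v \<Rightarrow> 'a::comm_ring_1"
  assumes eig: "\<And>i. i \<in> S \<Longrightarrow> mat_vec S M z i = \<mu> * z i" and fin: "finite S"
  shows "i \<in> S \<Longrightarrow> mat_vec S (mat_pow S M k) z i = \<mu>^k * z i"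
proof (induction k arbitrary: i)
  case 0
  have "mat_vec S (mat_id S) z i = (\<Sum>j\<in>S. if j = i then z j else 0)"
    unfolding mat_vec_def mat_id_def by (rule sum.cong) auto
  then show ?case using 0 fin by simp
next
  case (Suc k)
  have "mat_vec S (mat_pow S M (Suc k)) z i = (\<Sum>j\<in>S. \<Sum>l\<in>S. M i l * mat_pow S M k l j * z j)"
    unfolding mat_vec_def by (simp add: mat_mult_def sum_distrib_right)
  also have "\<dots> = (\<Sum>l\<in>S. \<Sum>j\<in>S. M i l * mat_pow S M k l j * z j)" by (rule sum.swap)
  also have "\<dots> = (\<Sum>l\<in>S. M i l * mat_vec S (mat_pow S M k) z l)"
    unfolding mat_vec_def by (simp add: sum_distrib_left mult.assoc)
  also have "\<dots> = (\<Sum>l\<in>S. \<mu>^k * (M i l * z l))" using Suc.IH by (intro sum.cong) auto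
  also have "\<dots> = \<mu>^k * mat_vec S M z i" unfolding mat_vec_def by (simp add: sum_distrib_left)
  also have "\<dots> = \<mu>^(Suc k) * z i" using eig[OF Suc.prems] by simp
  finally show ?case .
qed

lemma mat_pow_bound:
  fixes M :: "'v \<Rightarrow> 'v \<Rightarrow> complex"
  assumes fin: "finite S" and B: "\<And>i j. i \<in> S \<Longrightarrow> j \<in> S \<Longrightarrow> norm (M i j) \<le> B"
    and B0: "B \<ge> 0"
  shows "i \<in> S \<Longrightarrow> norm (mat_pow S M k i j) \<le> (real (card S) * B)^k"
proof (induction k arbitrary: i j)
  case 0
  then show ?case by (simp add: mat_id_def)
next
  case (Suc k)
  have "norm (mat_pow S M (Suc k) i j) \<le> (\<Sum>l\<in>S. norm (M i l) * norm (mat_pow S M k l j))"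
    unfolding mat_pow.simps mat_mult_def
    by (rule order.trans[OF norm_sum]) (simp add: norm_mult)
  also have "\<dots> \<le> (\<Sum>l\<in>S. B * (real (card S) * B)^k)"
    using Suc B B0 by (intro sum_mono mult_mono) auto
  also have "\<dots> = (real (card S) * B)^(Suc k)" by simp
  finally show ?case .
qed

lemma mat_exp_summable:
  fixes M :: "'v \<Rightarrow> 'v \<Rightarrow> complex"
  assumes fin: "finite S" and i: "i \<in> S"
  shows "summable (\<lambda>k. mat_pow S M k i j / of_nat (fact k))"
proof -
  define B where "B = (\<Sum>p\<in>S. \<Sum>q\<in>S. norm (M p q))"
  have B: "norm (M p q) \<le> B" if "p \<in> S" "q \<in> S" for p q
  proof -
    have "norm (M p q) \<le> (\<Sum>q\<in>S. norm (M p q))"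
      by (rule member_le_sum[OF that(2) _ fin]) auto
    also have "\<dots> \<le> B" unfolding B_def
      by (rule member_le_sum[OF that(1) _ fin]) (auto intro: sum_nonneg)
    finally show ?thesis .
  qed
  have B0: "B \<ge> 0" unfolding B_def by (intro sum_nonneg) auto
  define C where "C = real (card S) * B"
  have sm: "summable (\<lambda>k. C^k /\<^sub>R fact k)" by (rule summable_exp_generic)
  have bd: "norm (mat_pow S M k i j / of_nat (fact k)) \<le> C^k /\<^sub>R fact k" for k
  proof -
    have "norm (mat_pow S M k i j / of_nat (fact k)) = norm (mat_pow S M k i j) / fact k"
      by (simp add: norm_divide)
    also have "\<dots> \<le> C^k / fact k" unfolding C_def
      by (intro divide_right_mono mat_pow_bound[OF fin B B0 i]) auto
    finally show ?thesis by (simp add: divide_inverse mult.commute)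
  qed
  show ?thesis by (rule summable_comparison_test'[OF sm bd])
qed

lemma mat_exp_eig:
  fixes M :: "'v \<Rightarrow> 'v \<Rightarrow> complex"
  assumes eig: "\<And>i. i \<in> S \<Longrightarrow> mat_vec S M z i = \<mu> * z i" and fin: "finite S" and i: "i \<in> S"
  shows "mat_vec S (mat_exp S M) z i = exp \<mu> * z i"
proof -
  have "mat_vec S (mat_exp S M) z i = (\<Sum>j\<in>S. \<Sum>k. mat_pow S M k i j / of_nat (fact k) * z j)"
    unfolding mat_vec_def mat_exp_def
    by (intro sum.cong refl suminf_mult2 mat_exp_summable[OF fin i])
  also have "\<dots> = (\<Sum>k. \<Sum>j\<in>S. mat_pow S M k i j / of_nat (fact k) * z j)"
    by (rule suminf_sum[symmetric]) (intro summable_mult2 mat_exp_summable[OF fin i])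
  also have "\<dots> = (\<Sum>k. \<mu>^k * z i / of_nat (fact k))"
  proof (rule suminf_cong)
    fix k
    have "(\<Sum>j\<in>S. mat_pow S M k i j / of_nat (fact k) * z j) = mat_vec S (mat_pow S M k) z i / of_nat (fact k)"
      unfolding mat_vec_def by (simp add: sum_divide_distrib)
    also have "\<dots> = \<mu>^k * z i / of_nat (fact k)" using mat_pow_eig[OF eig fin i] by simp
    finally show "(\<Sum>j\<in>S. mat_pow S M k i j / of_nat (fact k) * z j) = \<mu>^k * z i / of_nat (fact k)" .
  qed
  also have "\<dots> = exp \<mu> * z i"
  proof -
    have "(\<lambda>k. \<mu>^k /\<^sub>R fact k * z i) sums (exp \<mu> * z i)" by (intro sums_mult2 exp_converges)
    moreover have "\<mu>^k /\<^sub>R fact k * z i = \<mu>^k * z i / of_nat (fact k)" for k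
      by (simp add: scaleR_conv_of_real divide_inverse mult_ac)
    ultimately have "(\<lambda>k. \<mu>^k * z i / of_nat (fact k)) sums (exp \<mu> * z i)" by simp
    thus ?thesis by (rule sums_unique[symmetric])
  qed
  finally show ?thesis .
qed

section \<open>Laplacian as neighbour sum\<close>

lemma lap_mv:
  fixes z :: "'v \<Rightarrow> 'a::real_field"
  assumes G: "simple_graph V adj" and i: "i \<in> V"
  shows "(\<Sum>j\<in>V. of_real (laplacian V adj i j) * z j) = (\<Sum>j\<in>neighbours V adj i. (z i - z j))"
proof -
  have fin: "finite V" using G unfolding simple_graph_def by auto
  have irr: "\<not> adj i i" using G unfolding simple_graph_def by auto
  let ?N = "neighbours V adj i"
  have N: "?N = {j \<in> V. adj i j}" unfolding neighbours_def by simp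
  have "(\<Sum>j\<in>V. of_real (laplacian V adj i j) * z j)
      = (\<Sum>j\<in>V. (if j = i then of_nat (Defs.degree V adj i) * z j else 0) - (if adj i j then z j else 0))"
    using i irr unfolding laplacian_def by (intro sum.cong) auto
  also have "\<dots> = of_nat (Defs.degree V adj i) * z i - (\<Sum>j\<in>?N. z j)"
    using i fin unfolding N by (simp add: sum_subtractf sum.inter_filter[symmetric])
  also have "\<dots> = (\<Sum>j\<in>?N. (z i - z j))"
    unfolding Defs.degree_def by (simp add: sum_subtractf)
  finally show ?thesis .
qed

lemma mat_vec_lin2:
  fixes P :: "'v \<Rightarrow> 'v \<Rightarrow> 'a::comm_ring_1"
  shows "mat_vec S P (\<lambda>j. a * x j + b * y j) k = a * mat_vec S P x k + b * mat_vec S P y k"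
  unfolding mat_vec_def by (simp add: algebra_simps sum.distrib sum_distrib_left)

lemma euler_pos: "exp (\<i> * complex_of_real \<phi>) = complex_of_real (cos \<phi>) + \<i> * complex_of_real (sin \<phi>)"
  by (simp add: cis_conv_exp[symmetric] cis.code Complex_eq)

lemma euler_neg: "exp (- (\<i> * complex_of_real \<phi>)) = complex_of_real (cos \<phi>) - \<i> * complex_of_real (sin \<phi>)"
  using euler_pos[of "- \<phi>"] by simp

section \<open>Structure of the Q-graph\<close>

locale qgraph =
  fixes V :: "'v set" and adj :: "'v \<Rightarrow> 'v \<Rightarrow> bool" and r :: nat
  assumes G: "simple_graph V adj" and reg: "regular V adj r"
begin

abbreviation "N \<equiv> neighbours V adj"
abbreviation "QV \<equiv> Q_vertices V adj"
abbreviation "QA \<equiv> Q_adj V adj"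
abbreviation "E \<equiv> edges V adj"
abbreviation "NQ \<equiv> neighbours QV QA"
abbreviation "LQ \<equiv> laplacian QV QA"

lemma finV: "finite V" using G unfolding simple_graph_def by auto
lemma adjV: "adj u w \<Longrightarrow> u \<in> V \<and> w \<in> V" using G unfolding simple_graph_def by auto
lemma adj_sym: "adj u w \<Longrightarrow> adj w u" using G unfolding simple_graph_def by auto
lemma adj_irr: "\<not> adj u u" using G unfolding simple_graph_def by auto

lemma N_iff: "w \<in> N v \<longleftrightarrow> adj v w" unfolding neighbours_def using adjV by auto
lemma finN: "finite (N v)" unfolding neighbours_def using finV by auto
lemma cardN: "v \<in> V \<Longrightarrow> card (N v) = r" using reg unfolding regular_def Defs.degree_def by auto

lemma edges_iff: "e \<in> E \<longleftrightarrow> (\<exists>u w. adj u w \<and> e = {u, w})" unfolding edges_def by auto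

lemma finE: "finite E"
proof -
  have "E \<subseteq> (\<lambda>(u, w). {u, w}) ` (V \<times> V)" unfolding edges_def using adjV by auto
  thus ?thesis using finV by (meson finite_SigmaI finite_imageI finite_subset)
qed

lemma edge_sub: "e \<in> E \<Longrightarrow> e \<subseteq> V" unfolding edges_def using adjV by auto

lemma edge_containing: "e \<in> E \<Longrightarrow> v \<in> e \<Longrightarrow> \<exists>w. adj v w \<and> e = {v, w}"
  unfolding edges_def using adj_sym by (auto simp: insert_commute)

lemma QV_cases:
  assumes "k \<in> QV"
  obtains v where "k = Inl v" "v \<in> V" | p q where "k = Inr {p, q}" "adj p q"
  using assms unfolding Q_vertices_def edges_def by auto

lemma Q_simple: "simple_graph QV QA"
  unfolding simple_graph_def
proof (intro conjI allI impI)
  show "finite QV" unfolding Q_vertices_def using finV finE by simp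
  fix u w
  show "QA u w \<Longrightarrow> u \<in> QV" "QA u w \<Longrightarrow> w \<in> QV"
    using edge_sub unfolding Q_vertices_def
    by (cases u; cases w; auto)+
  show "QA u w \<Longrightarrow> QA w u" by (cases u; cases w) auto
next
  fix u show "\<not> QA u u" by (cases u) auto
qed

lemma NQ_Inl: assumes v: "v \<in> V" shows "NQ (Inl v) = Inr ` ((\<lambda>w. {v, w}) ` N v)"
proof (intro set_eqI iffI)
  fix k assume k: "k \<in> NQ (Inl v)"
  then obtain e where e: "k = Inr e" "e \<in> E" "v \<in> e"
    unfolding neighbours_def by (cases k) auto
  obtain w where "adj v w" "e = {v, w}" using edge_containing[OF e(2,3)] by auto
  then show "k \<in> Inr ` ((\<lambda>w. {v, w}) ` N v)" using e(1) N_iff by auto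
next
  fix k :: "'v + 'v set" assume k: "k \<in> Inr ` ((\<lambda>w. {v, w}) ` N v)"
  then obtain w where w: "adj v w" "k = Inr {v, w}" using N_iff by auto
  have "{v, w} \<in> E" using w unfolding edges_def by auto
  then show "k \<in> NQ (Inl v)" using w unfolding neighbours_def Q_vertices_def by auto
qed

lemma NQ_Inr:
  assumes pq: "adj p q"
  shows "NQ (Inr {p, q}) = Inl ` {p, q} \<union> (Inr ` ((\<lambda>w. {p, w}) ` (N p - {q})) \<union> Inr ` ((\<lambda>w. {q, w}) ` (N q - {p})))"
proof (intro set_eqI iffI)
  have e: "{p, q} \<in> E" using pq unfolding edges_def by auto
  have pV: "p \<in> V" "q \<in> V" using adjV[OF pq] by auto
  have pnq: "p \<noteq> q" using pq adj_irr by auto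
  fix k assume k: "k \<in> NQ (Inr {p, q})"
  show "k \<in> Inl ` {p, q} \<union> (Inr ` ((\<lambda>w. {p, w}) ` (N p - {q})) \<union> Inr ` ((\<lambda>w. {q, w}) ` (N q - {p})))"
  proof (cases k)
    case (Inl u)
    then show ?thesis using k unfolding neighbours_def by auto
  next
    case (Inr f)
    hence f: "f \<in> E" "f \<noteq> {p, q}" "f \<inter> {p, q} \<noteq> {}" using k unfolding neighbours_def by auto
    show ?thesis
    proof (cases "p \<in> f")
      case True
      obtain w where w: "adj p w" "f = {p, w}" using edge_containing[OF f(1) True] by auto
      have "w \<noteq> q" using w f(2) by auto
      then show ?thesis using Inr w N_iff by auto
    next
      case False
      hence "q \<in> f" using f(3) by auto
      then obtain w where w: "adj q w" "f = {q, w}" using edge_containing[OF f(1)] by auto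
      have "w \<noteq> p" using w False by auto
      then show ?thesis using Inr w N_iff by auto
    qed
  qed
next
  have e: "{p, q} \<in> E" using pq unfolding edges_def by auto
  have pV: "p \<in> V" "q \<in> V" using adjV[OF pq] by auto
  have pnq: "p \<noteq> q" using pq adj_irr by auto
  fix k :: "'v + 'v set" assume k: "k \<in> Inl ` {p, q} \<union> (Inr ` ((\<lambda>w. {p, w}) ` (N p - {q})) \<union> Inr ` ((\<lambda>w. {q, w}) ` (N q - {p})))"
  show "k \<in> NQ (Inr {p, q})"
  proof -
    consider (a) "k = Inl p" | (b) "k = Inl q"
      | (c) w where "k = Inr {p, w}" "adj p w" "w \<noteq> q"
      | (d) w where "k = Inr {q, w}" "adj q w" "w \<noteq> p"
      using k N_iff by auto
    then show ?thesis
    proof cases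
      case a then show ?thesis using e pV unfolding neighbours_def Q_vertices_def by auto
    next
      case b then show ?thesis using e pV unfolding neighbours_def Q_vertices_def by auto
    next
      case c
      have f: "{p, w} \<in> E" using c unfolding edges_def by auto
      have "{p, w} \<noteq> {p, q}" using c pnq by (auto simp: doubleton_eq_iff)
      then show ?thesis using c e f unfolding neighbours_def Q_vertices_def by auto
    next
      case d
      have f: "{q, w} \<in> E" using d unfolding edges_def by auto
      have "{q, w} \<noteq> {p, q}" using d pnq by (auto simp: doubleton_eq_iff)
      then show ?thesis using d e f unfolding neighbours_def Q_vertices_def by auto
    qed
  qed
qed

lemma inj_pair: "inj_on (\<lambda>w. {v, w}) (N v)"
  by (rule inj_onI) (auto simp: doubleton_eq_iff N_iff adj_irr)

lemma sum_NQ_Inl: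
  fixes h :: "'v + 'v set \<Rightarrow> 'a::comm_monoid_add"
  assumes v: "v \<in> V"
  shows "(\<Sum>k\<in>NQ (Inl v). h k) = (\<Sum>w\<in>N v. h (Inr {v, w}))"
proof -
  have "(\<Sum>k\<in>NQ (Inl v). h k) = (\<Sum>k\<in>Inr ` ((\<lambda>w. {v, w}) ` N v). h k)" using NQ_Inl[OF v] by simp
  also have "\<dots> = (\<Sum>f\<in>(\<lambda>w. {v, w}) ` N v. h (Inr f))" by (simp add: sum.reindex)
  also have "\<dots> = (\<Sum>w\<in>N v. h (Inr {v, w}))" by (simp add: sum.reindex[OF inj_pair])
  finally show ?thesis .
qed

lemma sum_NQ_Inr:
  fixes h :: "'v + 'v set \<Rightarrow> 'a::comm_monoid_add"
  assumes pq: "adj p q"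
  shows "(\<Sum>k\<in>NQ (Inr {p, q}). h k) = h (Inl p) + h (Inl q)
     + (\<Sum>w\<in>N p - {q}. h (Inr {p, w})) + (\<Sum>w\<in>N q - {p}. h (Inr {q, w}))"
proof -
  have pnq: "p \<noteq> q" using pq adj_irr by auto
  let ?A = "Inl ` {p, q} :: ('v + 'v set) set"
  let ?B = "Inr ` ((\<lambda>w. {p, w}) ` (N p - {q})) :: ('v + 'v set) set"
  let ?C = "Inr ` ((\<lambda>w. {q, w}) ` (N q - {p})) :: ('v + 'v set) set"
  have finB: "finite ?B" "finite ?C" using finN by auto
  have BC: "?B \<inter> ?C = {}" using pnq by (auto simp: doubleton_eq_iff N_iff)
  have "(\<Sum>k\<in>NQ (Inr {p, q}). h k) = sum h ?A + (sum h ?B + sum h ?C)"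
    unfolding NQ_Inr[OF pq]
    by (subst sum.union_disjoint) (use finB BC in \<open>auto simp: sum.union_disjoint\<close>)
  also have "sum h ?A = h (Inl p) + h (Inl q)" using pnq by simp
  also have "sum h ?B = (\<Sum>w\<in>N p - {q}. h (Inr {p, w}))"
    using inj_on_subset[OF inj_pair[of p], of "N p - {q}"]
    by (simp add: sum.reindex)
  also have "sum h ?C = (\<Sum>w\<in>N q - {p}. h (Inr {q, w}))"
    using inj_on_subset[OF inj_pair[of q], of "N q - {p}"]
    by (simp add: sum.reindex)
  finally show ?thesis by (simp add: add.assoc)
qed

lemma LQ_mv: "k \<in> QV \<Longrightarrow> mat_vec QV LQ z k = (\<Sum>j\<in>NQ k. (z k - z j))"
  using lap_mv[OF Q_simple, of k z] unfolding mat_vec_def by simp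

definition uh :: "('v \<Rightarrow> real) \<Rightarrow> 'v + 'v set \<Rightarrow> real" where
  "uh u k = (case k of Inl v \<Rightarrow> u v | Inr e \<Rightarrow> 0)"
definition uc :: "('v \<Rightarrow> real) \<Rightarrow> 'v + 'v set \<Rightarrow> real" where
  "uc u k = (case k of Inl v \<Rightarrow> 0 | Inr e \<Rightarrow> sum u e)"

lemma uh_simps[simp]: "uh u (Inl v) = u v" "uh u (Inr e) = 0" unfolding uh_def by auto
lemma uc_simps[simp]: "uc u (Inl v) = 0" "uc u (Inr e) = sum u e" unfolding uc_def by auto

context
  fixes u :: "'v \<Rightarrow> real" and \<theta> :: real
  assumes lev: "\<And>v. v \<in> V \<Longrightarrow> (\<Sum>w\<in>N v. (u v - u w)) = \<theta> * u v"
begin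

lemma sumN: "v \<in> V \<Longrightarrow> (\<Sum>w\<in>N v. u w) = (real r - \<theta>) * u v"
proof -
  assume v: "v \<in> V"
  have "(\<Sum>w\<in>N v. (u v - u w)) = real r * u v - (\<Sum>w\<in>N v. u w)"
    using cardN[OF v] by (simp add: sum_subtractf)
  thus ?thesis using lev[OF v] by (simp add: algebra_simps)
qed

lemma pair_sum: "adj p w \<Longrightarrow> sum u {p, w} = u p + u w"
  using adj_irr by (cases "p = w") auto

lemma LQ_uh: "k \<in> QV \<Longrightarrow> mat_vec QV LQ (uh u) k = real r * uh u k - uc u k"
proof -
  assume k: "k \<in> QV"
  show ?thesis
  proof (cases rule: QV_cases[OF k])
    case (1 v)
    have "mat_vec QV LQ (uh u) k = (\<Sum>w\<in>N v. (u v - 0))"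
      unfolding LQ_mv[OF k] unfolding 1 sum_NQ_Inl[OF 1(2)] by simp
    then show ?thesis using cardN[OF 1(2)] 1 by simp
  next
    case (2 p q)
    have "mat_vec QV LQ (uh u) k = - (u p + u q)"
      unfolding LQ_mv[OF k] unfolding 2 sum_NQ_Inr[OF 2(2)] by simp
    then show ?thesis using 2 pair_sum[OF 2(2)] by simp
  qed
qed

lemma LQ_uc: "k \<in> QV \<Longrightarrow> mat_vec QV LQ (uc u) k = (\<theta> + 2) * uc u k - (2 * real r - \<theta>) * uh u k"
proof -
  assume k: "k \<in> QV"
  show ?thesis
  proof (cases rule: QV_cases[OF k])
    case (1 v)
    have "mat_vec QV LQ (uc u) k = (\<Sum>w\<in>N v. (0 - (u v + u w)))"
      unfolding LQ_mv[OF k] unfolding 1 sum_NQ_Inl[OF 1(2)] using pair_sum N_iff by (intro sum.cong) auto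
    also have "\<dots> = - (real r * u v + (real r - \<theta>) * u v)"
      using cardN[OF 1(2)] sumN[OF 1(2)] by (simp add: sum_subtractf sum.distrib)
    finally show ?thesis using 1 by (simp add: algebra_simps)
  next
    case (2 p q)
    have pV: "p \<in> V" "q \<in> V" using adjV[OF 2(2)] by auto
    have qp: "adj q p" using adj_sym[OF 2(2)] .
    define c where "c = u p + u q"
    have sp: "(\<Sum>w\<in>N p - {q}. c - sum u {p, w}) = real r * u q - (real r - \<theta>) * u p"
    proof -
      have "(\<Sum>w\<in>N p - {q}. c - sum u {p, w}) = (\<Sum>w\<in>N p - {q}. u q - u w)"
        unfolding c_def using pair_sum N_iff by (intro sum.cong) auto
      also have "\<dots> = (\<Sum>w\<in>N p. u q - u w)"
        using 2(2) N_iff finN by (simp add: sum_diff1)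
      also have "\<dots> = real r * u q - (real r - \<theta>) * u p"
        using cardN[OF pV(1)] sumN[OF pV(1)] by (simp add: sum_subtractf)
      finally show ?thesis .
    qed
    have sq: "(\<Sum>w\<in>N q - {p}. c - sum u {q, w}) = real r * u p - (real r - \<theta>) * u q"
    proof -
      have "(\<Sum>w\<in>N q - {p}. c - sum u {q, w}) = (\<Sum>w\<in>N q - {p}. u p - u w)"
        unfolding c_def using pair_sum N_iff by (intro sum.cong) auto
      also have "\<dots> = (\<Sum>w\<in>N q. u p - u w)"
        using qp N_iff finN by (simp add: sum_diff1)
      also have "\<dots> = real r * u p - (real r - \<theta>) * u q"
        using cardN[OF pV(2)] sumN[OF pV(2)] by (simp add: sum_subtractf)
      finally show ?thesis .
    qed
    have cc: "sum u {p, q} = c" unfolding c_def by (rule pair_sum[OF 2(2)])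
    have "mat_vec QV LQ (uc u) k = (c - 0) + (c - 0) + (\<Sum>w\<in>N p - {q}. c - sum u {p, w})
        + (\<Sum>w\<in>N q - {p}. c - sum u {q, w})"
      unfolding LQ_mv[OF k] unfolding 2 sum_NQ_Inr[OF 2(2)] by (simp add: cc)
    also have "\<dots> = (\<theta> + 2) * c" unfolding sp sq by (simp add: c_def algebra_simps)
    finally show ?thesis using 2 cc by simp
  qed
qed

lemma LQ_comb:
  assumes k: "k \<in> QV" and c1: "real r - (2 * real r - \<theta>) * \<gamma> = lam" and c2: "(\<theta> + 2) * \<gamma> - 1 = lam * \<gamma>"
  shows "mat_vec QV LQ (\<lambda>j. 1 * uh u j + \<gamma> * uc u j) k = lam * (1 * uh u k + \<gamma> * uc u k)"
proof -
  have "mat_vec QV LQ (\<lambda>j. 1 * uh u j + \<gamma> * uc u j) k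
      = (real r * uh u k - uc u k) + \<gamma> * ((\<theta> + 2) * uc u k - (2 * real r - \<theta>) * uh u k)"
    unfolding mat_vec_lin2 LQ_uh[OF k] LQ_uc[OF k] by simp
  also have "\<dots> = (real r - (2 * real r - \<theta>) * \<gamma>) * uh u k + ((\<theta> + 2) * \<gamma> - 1) * uc u k"
    by (simp add: algebra_simps)
  also have "\<dots> = lam * (1 * uh u k + \<gamma> * uc u k)" unfolding c1 c2 by (simp add: algebra_simps)
  finally show ?thesis .
qed

lemma LQ_uc_2r:
  assumes k: "k \<in> QV" and th: "\<theta> = 2 * real r"
  shows "mat_vec QV LQ (uc u) k = (2 * real r + 2) * uc u k"
  using LQ_uc[OF k] th by simp

end

definition Mt :: "real \<Rightarrow> ('v + 'v set) \<Rightarrow> ('v + 'v set) \<Rightarrow> complex" where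
  "Mt t = (\<lambda>i j. - \<i> * of_real t * of_real (LQ i j))"

lemma finQV: "finite QV" using Q_simple unfolding simple_graph_def by auto

lemma exp_eig_real:
  assumes eig: "\<And>k. k \<in> QV \<Longrightarrow> mat_vec QV LQ z k = lam * z k" and k: "k \<in> QV"
  shows "mat_vec QV (mat_exp QV (Mt t)) (\<lambda>j. complex_of_real (z j)) k
     = exp (- \<i> * of_real t * of_real lam) * of_real (z k)"
proof (rule mat_exp_eig[OF _ finQV k])
  fix i assume i: "i \<in> QV"
  have "mat_vec QV (Mt t) (\<lambda>j. complex_of_real (z j)) i = (- \<i> * of_real t) * of_real (mat_vec QV LQ z i)"
    unfolding Mt_def mat_vec_def by (simp add: sum_distrib_left mult_ac)
  also have "\<dots> = (- \<i> * of_real t * of_real lam) * of_real (z i)" using eig[OF i] by simp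
  finally show "mat_vec QV (Mt t) (\<lambda>j. complex_of_real (z j)) i = (- \<i> * of_real t * of_real lam) * of_real (z i)" .
qed

definition Gf :: "real \<Rightarrow> real \<Rightarrow> complex" where
  "Gf \<theta> t = exp (- \<i> * of_real t * (of_nat r + 2) / 2) * exp (- \<i> * of_real t * of_real \<theta> / 2)
     * (of_real (cos (Delta_Q r \<theta> * t / 2))
        + \<i> * of_real ((\<theta> + 2 - real r) / Delta_Q r \<theta>) * of_real (sin (Delta_Q r \<theta> * t / 2)))"

lemma Delta_sq: "(Delta_Q r \<theta>)^2 = (real r + 2 - \<theta>)^2 + 4 * \<theta>"
proof -
  have "(real r + 2 - \<theta>)^2 + 4 * \<theta> = (\<theta> - real r)^2 + 4 * real r + 4"
    by (simp add: power2_eq_square algebra_simps)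
  also have "\<dots> \<ge> 0" by simp
  finally show ?thesis unfolding Delta_Q_def by simp
qed

lemma Delta_pos: "Delta_Q r \<theta> > 0"
proof -
  have "(real r + 2 - \<theta>)^2 + 4 * \<theta> = (\<theta> - real r)^2 + 4 * real r + 4"
    by (simp add: power2_eq_square algebra_simps)
  also have "\<dots> > 0" by (simp add: add_nonneg_pos)
  finally show ?thesis unfolding Delta_Q_def by simp
qed

lemma Gf_2r: "Gf (2 * real r) t = exp (- \<i> * of_real t * of_real (real r))"
proof -
  have D: "Delta_Q r (2 * real r) = real r + 2"
  proof -
    have "(real r + 2 - 2 * real r)^2 + 4 * (2 * real r) = (real r + 2)^2"
      by (simp add: power2_eq_square algebra_simps)
    thus ?thesis unfolding Delta_Q_def by simp
  qed
  have one: "(2 * real r + 2 - real r) / (real r + 2) = 1" by simp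
  have e: "complex_of_real (cos ((real r + 2) * t / 2)) + \<i> * complex_of_real 1 * complex_of_real (sin ((real r + 2) * t / 2))
     = exp (\<i> * complex_of_real ((real r + 2) * t / 2))" by (simp only: euler_pos of_real_1 mult_1_right)
  have "Gf (2 * real r) t = exp (- \<i> * of_real t * (of_nat r + 2) / 2) * exp (- \<i> * of_real t * of_real (2 * real r) / 2)
     * exp (\<i> * of_real ((real r + 2) * t / 2))"
    unfolding Gf_def D one e ..
  also have "\<dots> = exp ((- \<i> * of_real t * (of_nat r + 2) / 2) + (- \<i> * of_real t * of_real (2 * real r) / 2)
     + (\<i> * of_real ((real r + 2) * t / 2)))"
    by (simp only: exp_add)
  also have "(- \<i> * of_real t * (of_nat r + 2) / 2) + (- \<i> * of_real t * of_real (2 * real r) / 2)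
     + (\<i> * of_real ((real r + 2) * t / 2)) = - \<i> * of_real t * of_real (real r)"
    by (simp add: field_simps)
  finally show ?thesis .
qed

lemma Gf_alg:
  assumes th: "\<theta> \<noteq> 2 * real r"
  defines "D \<equiv> Delta_Q r \<theta>"
  defines "s \<equiv> real r + 2 + \<theta>"
  defines "lp \<equiv> (s + D) / 2" and "lm \<equiv> (s - D) / 2"
  defines "cp \<equiv> 1/2 + (real r - 2 - \<theta>) / (2 * D)" and "cm \<equiv> 1/2 - (real r - 2 - \<theta>) / (2 * D)"
  shows "of_real cp * exp (- \<i> * of_real t * of_real lp) + of_real cm * exp (- \<i> * of_real t * of_real lm) = Gf \<theta> t"
proof -
  have D: "D > 0" unfolding D_def by (rule Delta_pos)
  define X where "X = exp (- \<i> * of_real t * (of_nat r + 2) / 2) * exp (- \<i> * of_real t * of_real \<theta> / 2)"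
  define \<phi> where "\<phi> = D * t / 2"
  have ep: "exp (- \<i> * of_real t * of_real lp) = X * exp (- (\<i> * of_real \<phi>))"
  proof -
    have "- \<i> * of_real t * of_real lp = (- \<i> * of_real t * (of_nat r + 2) / 2) + (- \<i> * of_real t * of_real \<theta> / 2) + (- (\<i> * of_real \<phi>))"
      unfolding lp_def s_def \<phi>_def by (simp add: field_simps)
    thus ?thesis unfolding X_def by (simp only: exp_add)
  qed
  have em: "exp (- \<i> * of_real t * of_real lm) = X * exp (\<i> * of_real \<phi>)"
  proof -
    have "- \<i> * of_real t * of_real lm = (- \<i> * of_real t * (of_nat r + 2) / 2) + (- \<i> * of_real t * of_real \<theta> / 2) + (\<i> * of_real \<phi>)"
      unfolding lm_def s_def \<phi>_def by (simp add: field_simps)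
    thus ?thesis unfolding X_def by (simp only: exp_add)
  qed
  have "of_real cp * exp (- \<i> * of_real t * of_real lp) + of_real cm * exp (- \<i> * of_real t * of_real lm)
     = X * (of_real (cp + cm) * of_real (cos \<phi>) + \<i> * of_real (cm - cp) * of_real (sin \<phi>))"
    unfolding ep em euler_pos euler_neg by (simp add: algebra_simps)
  also have "cp + cm = 1" unfolding cp_def cm_def by simp
  also have "cm - cp = (\<theta> + 2 - real r) / D" unfolding cp_def cm_def using D by (simp add: field_simps)
  finally show ?thesis unfolding Gf_def X_def \<phi>_def D_def by (simp add: mult.assoc)
qed

context
  fixes u :: "'v \<Rightarrow> real" and \<theta> :: real
  assumes lev: "\<And>v. v \<in> V \<Longrightarrow> (\<Sum>w\<in>N v. (u v - u w)) = \<theta> * u v"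
begin

lemma exp_uh:
  assumes v: "v \<in> V"
  shows "mat_vec QV (mat_exp QV (Mt t)) (\<lambda>j. complex_of_real (uh u j)) (Inl v) = Gf \<theta> t * of_real (u v)"
proof -
  have kv: "Inl v \<in> QV" using v unfolding Q_vertices_def by auto
  let ?E = "mat_exp QV (Mt t)"
  show ?thesis
  proof (cases "\<theta> = 2 * real r")
    case True
    define g where "g = 1 / (real r + 2)"
    have rp: "real r + 2 > 0" by (simp add: add_nonneg_pos)
    have h0: "(real r + 2) * g = 1" unfolding g_def using rp by simp
    have h: "real r * g + 2 * g = 1" using h0 by (simp add: ring_distribs)
    have c1: "real r - (2 * real r - \<theta>) * g = real r" using True by simp
    have c2: "(\<theta> + 2) * g - 1 = real r * g" using True h by (simp add: ring_distribs mult.commute)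
    have e1: "mat_vec QV LQ (\<lambda>j. 1 * uh u j + g * uc u j) k = real r * (1 * uh u k + g * uc u k)"
      if "k \<in> QV" for k
      by (rule LQ_comb[OF lev that c1 c2])
    have e2: "mat_vec QV LQ (uc u) k = (2 * real r + 2) * uc u k" if "k \<in> QV" for k
      by (rule LQ_uc_2r[OF lev that True])
    have split: "(\<lambda>j. complex_of_real (uh u j))
        = (\<lambda>j. 1 * complex_of_real (1 * uh u j + g * uc u j) + complex_of_real (- g) * complex_of_real (uc u j))"
      by (rule ext) simp
    have "mat_vec QV ?E (\<lambda>j. complex_of_real (uh u j)) (Inl v)
       = exp (- \<i> * of_real t * of_real (real r)) * of_real (u v)"
    proof -
      have A: "mat_vec QV ?E (\<lambda>j. complex_of_real (uh u j)) (Inl v)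
        = 1 * mat_vec QV ?E (\<lambda>j. complex_of_real (1 * uh u j + g * uc u j)) (Inl v)
          + complex_of_real (- g) * mat_vec QV ?E (\<lambda>j. complex_of_real (uc u j)) (Inl v)"
        by (subst split) (rule mat_vec_lin2)
      show ?thesis using A exp_eig_real[OF e1 kv, of t] exp_eig_real[OF e2 kv, of t] by simp
    qed
    also have "exp (- \<i> * of_real t * of_real (real r)) = Gf \<theta> t" using Gf_2r True by simp
    finally show ?thesis .
  next
    case False
    define D where "D = Delta_Q r \<theta>"
    define s where "s = real r + 2 + \<theta>"
    define lp where "lp = (s + D) / 2"
    define lm where "lm = (s - D) / 2"
    define cp where "cp = 1/2 + (real r - 2 - \<theta>) / (2 * D)"
    define cm where "cm = 1/2 - (real r - 2 - \<theta>) / (2 * D)"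
    define gp where "gp = (real r - lp) / (2 * real r - \<theta>)"
    define gm where "gm = (real r - lm) / (2 * real r - \<theta>)"
    have nz: "2 * real r - \<theta> \<noteq> 0" using False by simp
    have Dp: "D > 0" unfolding D_def by (rule Delta_pos)
    hence Dnz: "D \<noteq> 0" by simp
    have D2: "D^2 = (real r + 2 - \<theta>)^2 + 4 * \<theta>" unfolding D_def by (rule Delta_sq)
    have ds: "D^2 - s^2 = - 4 * \<theta> * (real r + 1)"
      unfolding D2 s_def by (simp add: power2_eq_square algebra_simps)
    have quad: "l^2 - s * l + \<theta> * (real r + 1) = 0" if "l = (s + D) / 2 \<or> l = (s - D) / 2" for l
    proof -
      have "4 * (l^2 - s * l) = D^2 - s^2"
      proof (cases "l = (s + D) / 2")
        case True
        show ?thesis unfolding True by (simp add: power2_eq_square field_simps)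
      next
        case False
        hence l: "l = (s - D) / 2" using that by blast
        show ?thesis unfolding l by (simp add: power2_eq_square field_simps)
      qed
      thus ?thesis using ds by simp
    qed
    have c2: "(\<theta> + 2) * ((real r - l) / (2 * real r - \<theta>)) - 1 = l * ((real r - l) / (2 * real r - \<theta>))"
      if "l = (s + D) / 2 \<or> l = (s - D) / 2" for l
    proof -
      have P: "(\<theta> + 2) * (real r - l) - (2 * real r - \<theta>) = l * (real r - l)"
        using quad[OF that] unfolding s_def by (simp add: power2_eq_square algebra_simps)
      define X where "X = (real r - l) / (2 * real r - \<theta>)"
      have Xc: "X * (2 * real r - \<theta>) = real r - l" unfolding X_def using nz by simp
      have "((\<theta> + 2) * X - 1 - l * X) * (2 * real r - \<theta>)
          = (\<theta> + 2) * (X * (2 * real r - \<theta>)) - (2 * real r - \<theta>) - l * (X * (2 * real r - \<theta>))"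
        by (simp add: algebra_simps)
      also have "\<dots> = (\<theta> + 2) * (real r - l) - (2 * real r - \<theta>) - l * (real r - l)" by (simp only: Xc)
      also have "\<dots> = 0" using P by simp
      finally have "(\<theta> + 2) * X - 1 - l * X = 0" using nz by simp
      thus ?thesis unfolding X_def by simp
    qed
    have c1: "real r - (2 * real r - \<theta>) * ((real r - l) / (2 * real r - \<theta>)) = l" for l
      using nz by simp
    have c2p: "(\<theta> + 2) * ((real r - lp) / (2 * real r - \<theta>)) - 1 = lp * ((real r - lp) / (2 * real r - \<theta>))"
      using c2[of lp] unfolding lp_def by simp
    have c2m: "(\<theta> + 2) * ((real r - lm) / (2 * real r - \<theta>)) - 1 = lm * ((real r - lm) / (2 * real r - \<theta>))"
      using c2[of lm] unfolding lm_def by simp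
    have ep: "mat_vec QV LQ (\<lambda>j. 1 * uh u j + gp * uc u j) k = lp * (1 * uh u k + gp * uc u k)"
      if "k \<in> QV" for k
      unfolding gp_def by (rule LQ_comb[OF lev that c1 c2p])
    have em: "mat_vec QV LQ (\<lambda>j. 1 * uh u j + gm * uc u j) k = lm * (1 * uh u k + gm * uc u k)"
      if "k \<in> QV" for k
      unfolding gm_def by (rule LQ_comb[OF lev that c1 c2m])
    have csum: "cp + cm = 1" unfolding cp_def cm_def by simp
    have cdiff: "cp - cm = (real r - 2 - \<theta>) / D" unfolding cp_def cm_def by simp
    have cl: "cp * lp + cm * lm = real r"
    proof -
      have "cp * lp + cm * lm = (cp + cm) * (s / 2) + (cp - cm) * (D / 2)"
        unfolding lp_def lm_def by (simp add: algebra_simps add_divide_distrib diff_divide_distrib)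
      also have "\<dots> = s / 2 + (real r - 2 - \<theta>) / 2" unfolding csum cdiff using Dnz by simp
      also have "\<dots> = real r" unfolding s_def by (simp add: field_simps)
      finally show ?thesis .
    qed
    have cg: "cp * gp + cm * gm = 0"
    proof -
      have "cp * gp + cm * gm = (cp * (real r - lp) + cm * (real r - lm)) / (2 * real r - \<theta>)"
        unfolding gp_def gm_def by (simp add: add_divide_distrib)
      also have "cp * (real r - lp) + cm * (real r - lm) = real r * (cp + cm) - (cp * lp + cm * lm)"
        by (simp add: algebra_simps)
      also have "\<dots> = 0" using csum cl by simp
      finally show ?thesis by simp
    qed
    have rsplit: "cp * (1 * uh u j + gp * uc u j) + cm * (1 * uh u j + gm * uc u j) = uh u j" for j
    proof -
      have "cp * (1 * uh u j + gp * uc u j) + cm * (1 * uh u j + gm * uc u j)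
          = (cp + cm) * uh u j + (cp * gp + cm * gm) * uc u j" by (simp add: algebra_simps)
      thus ?thesis using csum cg by simp
    qed
    have split: "(\<lambda>j. complex_of_real (uh u j))
        = (\<lambda>j. complex_of_real cp * complex_of_real (1 * uh u j + gp * uc u j)
             + complex_of_real cm * complex_of_real (1 * uh u j + gm * uc u j))"
      by (rule ext) (simp only: of_real_mult[symmetric] of_real_add[symmetric] rsplit)
    have A: "mat_vec QV ?E (\<lambda>j. complex_of_real (uh u j)) (Inl v)
        = complex_of_real cp * mat_vec QV ?E (\<lambda>j. complex_of_real (1 * uh u j + gp * uc u j)) (Inl v)
          + complex_of_real cm * mat_vec QV ?E (\<lambda>j. complex_of_real (1 * uh u j + gm * uc u j)) (Inl v)"
      by (subst split) (rule mat_vec_lin2)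
    have "mat_vec QV ?E (\<lambda>j. complex_of_real (uh u j)) (Inl v)
       = (of_real cp * exp (- \<i> * of_real t * of_real lp) + of_real cm * exp (- \<i> * of_real t * of_real lm)) * of_real (u v)"
      using A exp_eig_real[OF ep kv, of t] exp_eig_real[OF em kv, of t] by (simp add: algebra_simps)
    also have "of_real cp * exp (- \<i> * of_real t * of_real lp) + of_real cm * exp (- \<i> * of_real t * of_real lm) = Gf \<theta> t"
      unfolding cp_def cm_def lp_def lm_def s_def D_def by (rule Gf_alg[OF False])
    finally show ?thesis .
  qed
qed

end

end


lemma unit_diff_sum:
  fixes w :: "'a \<Rightarrow> 'x::comm_ring_1"
  assumes "finite S" "a \<in> S" "b \<in> S"
  shows "(\<Sum>i\<in>S. (unit_vec a i - unit_vec b i) * w i) = w a - w b"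
proof -
  have "(\<Sum>i\<in>S. (unit_vec a i - unit_vec b i) * w i) = (\<Sum>i\<in>S. unit_vec a i * w i) - (\<Sum>i\<in>S. unit_vec b i * w i)"
    by (simp add: left_diff_distrib sum_subtractf)
  also have "(\<Sum>i\<in>S. unit_vec a i * w i) = (\<Sum>i\<in>S. if i = a then w i else 0)"
    by (rule sum.cong) (auto simp: unit_vec_def)
  also have "(\<Sum>i\<in>S. unit_vec b i * w i) = (\<Sum>i\<in>S. if i = b then w i else 0)"
    by (rule sum.cong) (auto simp: unit_vec_def)
  finally show ?thesis using assms by simp
qed

lemma bilin_eq: "bilin S x P y = (\<Sum>i\<in>S. x i * mat_vec S P y i)"
  unfolding bilin_def mat_vec_def by (simp add: sum_distrib_left mult.assoc)

lemma mat_vec_sum: "mat_vec S P (\<lambda>j. \<Sum>\<theta>\<in>F. g \<theta> j) k = (\<Sum>\<theta>\<in>F. mat_vec S P (g \<theta>) k)"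
proof -
  have "mat_vec S P (\<lambda>j. \<Sum>\<theta>\<in>F. g \<theta> j) k = (\<Sum>j\<in>S. \<Sum>\<theta>\<in>F. P k j * g \<theta> j)"
    unfolding mat_vec_def by (simp add: sum_distrib_left)
  also have "\<dots> = (\<Sum>\<theta>\<in>F. \<Sum>j\<in>S. P k j * g \<theta> j)" by (rule sum.swap)
  finally show ?thesis unfolding mat_vec_def .
qed

theorem lemma4p1:
  fixes V :: "'v set" and adj :: "'v \<Rightarrow> 'v \<Rightarrow> bool" and r :: nat and a b c d :: 'v
  assumes "simple_graph V adj" and "connected_graph V adj" and "regular V adj r"
    and "r \<ge> 2"
    and "a \<in> V" "b \<in> V" "c \<in> V" "d \<in> V"
  defines "lhs \<equiv> \<lambda>t::real. (1/2) * bilin (Q_vertices V adj)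
            (\<lambda>v. unit_vec (Inl a) v - unit_vec (Inl b) v)
            (mat_exp (Q_vertices V adj) (\<lambda>i j. - \<i> * of_real t * of_real (laplacian (Q_vertices V adj) (Q_adj V adj) i j)))
            (\<lambda>v. unit_vec (Inl c) v - unit_vec (Inl d) v)"
    and "term \<equiv> \<lambda>(t::real) (\<theta>::real).
            exp (- \<i> * of_real t * of_real \<theta> / 2)
          * of_real (bilin V (\<lambda>v. unit_vec a v - unit_vec b v) (lap_proj V adj \<theta>)
                          (\<lambda>v. unit_vec c v - unit_vec d v))
          * (of_real (cos (Delta_Q r \<theta> * t / 2))
             + \<i> * of_real ((\<theta> + 2 - real r) / Delta_Q r \<theta>) * of_real (sin (Delta_Q r \<theta> * t / 2)))"
  shows "(\<not> bipartite V adj \<longrightarrow> (\<forall>t::real.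
            lhs t = (1/2) * exp (- \<i> * of_real t * (of_nat r + 2) / 2)
                      * (\<Sum>\<theta> \<in> lap_spectrum V adj. term t \<theta>)))
       \<and> (bipartite V adj \<longrightarrow> (\<forall>t::real.
            lhs t = (1/2) * exp (- \<i> * of_real t * (of_nat r + 2) / 2)
                      * (\<Sum>\<theta> \<in> lap_spectrum V adj - {2 * real r}. term t \<theta>)
                    + (1/2) * exp (- \<i> * of_nat r * of_real t)
                      * of_real (bilin V (\<lambda>v. unit_vec a v - unit_vec b v)
                                   (lap_proj V adj (2 * real r))
                                   (\<lambda>v. unit_vec c v - unit_vec d v))))"
proof -
  note lhs_def = assms(9) and term_def = assms(10)
  have G: "simple_graph V adj" by (rule assms(1))
  interpret qg: qgraph V adj r using assms(1,3) by unfold_locales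
  interpret sm: symmat V "laplacian V adj"
  proof
    show "finite V" by (rule qg.finV)
    show "laplacian V adj i j = laplacian V adj j i" for i j
      unfolding laplacian_def using qg.adj_sym by auto
    show "laplacian V adj i j \<noteq> 0 \<Longrightarrow> i \<in> V \<and> j \<in> V" for i j
      unfolding laplacian_def by (auto split: if_splits)
  qed
  define Sp where "Sp = lap_spectrum V adj"
  have finSp: "finite Sp" unfolding Sp_def lap_spectrum_def by (rule sm.finite_spec)
  define y0 :: "'v \<Rightarrow> real" where "y0 = (\<lambda>v. unit_vec c v - unit_vec d v)"
  have y0s: "supported V y0" unfolding y0_def supported_def unit_vec_def using assms(7,8) by auto
  define u where "u \<theta> = mat_vec V (lap_proj V adj \<theta>) y0" for \<theta>
  have ueig: "u \<theta> \<in> eigenspace V (laplacian V adj) \<theta>" for \<theta>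
    unfolding u_def lap_proj_def by (rule sm.proj_eig[OF y0s])
  have lev: "(\<Sum>w\<in>neighbours V adj v. (u \<theta> v - u \<theta> w)) = \<theta> * u \<theta> v" if "v \<in> V" for v \<theta>
  proof -
    have "mat_vec V (laplacian V adj) (u \<theta>) v = \<theta> * u \<theta> v" by (rule sm.eigD[OF ueig that])
    moreover have "mat_vec V (laplacian V adj) (u \<theta>) v = (\<Sum>w\<in>neighbours V adj v. (u \<theta> v - u \<theta> w))"
      using lap_mv[OF G that, of "u \<theta>"] unfolding mat_vec_def by simp
    ultimately show ?thesis by simp
  qed
  have usupp: "supported V (u \<theta>)" for \<theta> using sm.eig_supp[OF ueig] .
  have decomp: "y0 v = (\<Sum>\<theta>\<in>Sp. u \<theta> v)" for v
  proof (cases "v \<in> V")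
    case True
    then show ?thesis unfolding Sp_def lap_spectrum_def u_def lap_proj_def
      by (rule sm.spec_decomp[OF y0s])
  next
    case False
    then show ?thesis using y0s usupp unfolding supported_def by simp
  qed
  define f where "f \<theta> = u \<theta> a - u \<theta> b" for \<theta>
  have fb: "bilin V (\<lambda>v. unit_vec a v - unit_vec b v) (lap_proj V adj \<theta>) (\<lambda>v. unit_vec c v - unit_vec d v) = f \<theta>" for \<theta>
    unfolding bilin_eq y0_def[symmetric] u_def[symmetric] f_def
    by (rule unit_diff_sum[OF qg.finV assms(5,6)])
  define yQ :: "'v + 'v set \<Rightarrow> complex" where "yQ = (\<lambda>v. unit_vec (Inl c) v - unit_vec (Inl d) v)"
  have yQ_eq: "yQ = (\<lambda>j. \<Sum>\<theta>\<in>Sp. complex_of_real (qg.uh (u \<theta>) j))"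
  proof (rule ext)
    fix j :: "'v + 'v set"
    show "yQ j = (\<Sum>\<theta>\<in>Sp. complex_of_real (qg.uh (u \<theta>) j))"
    proof (cases j)
      case (Inl v)
      have "yQ j = complex_of_real (y0 v)" unfolding yQ_def y0_def Inl unit_vec_def by simp
      also have "\<dots> = (\<Sum>\<theta>\<in>Sp. complex_of_real (u \<theta> v))" unfolding decomp by simp
      finally show ?thesis unfolding Inl by simp
    next
      case (Inr e)
      then show ?thesis unfolding yQ_def unit_vec_def by simp
    qed
  qed
  have Einl: "mat_vec (Q_vertices V adj) (mat_exp (Q_vertices V adj) (qg.Mt t)) yQ (Inl v)
      = (\<Sum>\<theta>\<in>Sp. qg.Gf \<theta> t * of_real (u \<theta> v))" if v: "v \<in> V" for v t
    unfolding yQ_eq mat_vec_sum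
    by (rule sum.cong[OF refl]) (rule qg.exp_uh[OF lev v])
  have inQ: "Inl x \<in> Q_vertices V adj" if "x \<in> V" for x using that unfolding Q_vertices_def by auto
  have finQ: "finite (Q_vertices V adj)" by (rule qg.finQV)
  have lhs_eq: "lhs t = (1/2) * (\<Sum>\<theta>\<in>Sp. qg.Gf \<theta> t * of_real (f \<theta>))" for t
  proof -
    have "lhs t = (1/2) * bilin (Q_vertices V adj) (\<lambda>v. unit_vec (Inl a) v - unit_vec (Inl b) v)
        (mat_exp (Q_vertices V adj) (qg.Mt t)) yQ"
      unfolding lhs_def qg.Mt_def yQ_def ..
    also have "bilin (Q_vertices V adj) (\<lambda>v. unit_vec (Inl a) v - unit_vec (Inl b) v)
        (mat_exp (Q_vertices V adj) (qg.Mt t)) yQ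
      = mat_vec (Q_vertices V adj) (mat_exp (Q_vertices V adj) (qg.Mt t)) yQ (Inl a)
        - mat_vec (Q_vertices V adj) (mat_exp (Q_vertices V adj) (qg.Mt t)) yQ (Inl b)"
      unfolding bilin_eq by (rule unit_diff_sum[OF finQ inQ[OF assms(5)] inQ[OF assms(6)]])
    also have "\<dots> = (\<Sum>\<theta>\<in>Sp. qg.Gf \<theta> t * of_real (f \<theta>))"
      unfolding Einl[OF assms(5)] Einl[OF assms(6)] f_def
      by (simp add: sum_subtractf algebra_simps)
    finally show ?thesis .
  qed
  have rhs_eq: "(1/2) * exp (- \<i> * of_real t * (of_nat r + 2) / 2) * (\<Sum>\<theta>\<in>F. term t \<theta>)
      = (1/2) * (\<Sum>\<theta>\<in>F. qg.Gf \<theta> t * of_real (f \<theta>))" for t F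
    unfolding term_def qg.Gf_def fb by (simp add: sum_distrib_left mult_ac)
  have extra: "(1/2) * exp (- \<i> * of_nat r * of_real t)
      * of_real (bilin V (\<lambda>v. unit_vec a v - unit_vec b v) (lap_proj V adj (2 * real r))
                  (\<lambda>v. unit_vec c v - unit_vec d v))
      = (1/2) * (qg.Gf (2 * real r) t * of_real (f (2 * real r)))" for t
    unfolding fb qg.Gf_2r by (simp add: mult_ac)
  have f2r: "f (2 * real r) = 0" if "2 * real r \<notin> Sp"
  proof -
    have "lap_proj V adj (2 * real r) = (\<lambda>i j. 0)"
      unfolding lap_proj_def by (rule sm.proj_nonspec) (use that in \<open>simp add: Sp_def lap_spectrum_def\<close>)
    thus ?thesis unfolding f_def u_def mat_vec_def by simp
  qed
  have split2r: "(\<Sum>\<theta>\<in>Sp. qg.Gf \<theta> t * of_real (f \<theta>))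
      = (\<Sum>\<theta>\<in>Sp - {2 * real r}. qg.Gf \<theta> t * of_real (f \<theta>)) + qg.Gf (2 * real r) t * of_real (f (2 * real r))" for t
  proof (cases "2 * real r \<in> Sp")
    case True
    then show ?thesis using finSp by (simp add: sum.remove add.commute)
  next
    case False
    then show ?thesis using f2r by simp
  qed
  show ?thesis
  proof (intro conjI impI allI)
    fix t :: real
    show "lhs t = (1/2) * exp (- \<i> * of_real t * (of_nat r + 2) / 2) * (\<Sum>\<theta> \<in> lap_spectrum V adj. term t \<theta>)"
      unfolding lhs_eq rhs_eq Sp_def[symmetric] ..
  next
    fix t :: real
    show "lhs t = (1/2) * exp (- \<i> * of_real t * (of_nat r + 2) / 2)
                      * (\<Sum>\<theta> \<in> lap_spectrum V adj - {2 * real r}. term t \<theta>)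
                    + (1/2) * exp (- \<i> * of_nat r * of_real t)
                      * of_real (bilin V (\<lambda>v. unit_vec a v - unit_vec b v)
                                   (lap_proj V adj (2 * real r))
                                   (\<lambda>v. unit_vec c v - unit_vec d v))"
      unfolding lhs_eq rhs_eq extra Sp_def[symmetric] split2r by (simp add: algebra_simps)
  qed
qed

end
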